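(* Let $X\in\{\pm1\}$ be a binary random variable with mean $\mu\in[-1,1]$, i.e. $\Pr(X=1)=(1+\mu)/2$. Let $Y$ be an observation of $X$ through a BMS channel with moment sequence $\{q_k\}_{k\in\mathbb{N}}$, and let $U$ be another observation on the same probability space such that $U - X - Y$ forms a Markov chain. Then $$H(X\mid Y)=\sum_{k=1}^\infty c_k(1-q_k)(1-\mu^{2k}),\qquad H(X\mid Y,U)=\sum_{k=1}^\infty c_k(1-q_k)\big(1-\|\mathbb{E}[X\mid U]\|_{2k}^{2k}\big).$$
   Context: A BMS channel has input $\{\pm1\}$, output in $\overline{\mathbb{R}}$ and transition density with $w(y\mid+1)=w(-y\mid-1)$. Its moment sequence is $q_k=\mathbb{E}\big[\mathbb{E}[X_{\mathrm u}\mid Y_{\mathrm u}]^{2k}\big]$, where $X_{\mathrm u}$ is uniform on $\{\pm1\}$ and $Y_{\mathrm u}$ is its output through the channel. $c_k=\frac{1}{(\ln2)\,2k(2k-1)}$. Entropies are in bits. $\|Z\|_p=(\mathbb{E}|Z|^p)^{1/p}$. *)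

theory Defs
  imports "HOL-Probability.Probability"
begin

text \<open>A BMS channel is given by its output law P (a probability measure on the Borel
  sets of the extended reals) for input +1; the output law for input x in {-1,1}
  is the law of x * y with y ~ P, so that the law for input -1 is the reflection of P.\<close>

definition bms :: "ereal measure \<Rightarrow> bool" where
  "bms P \<longleftrightarrow> prob_space P \<and> sets P = sets (borel :: ereal measure)"

definition bms_out :: "ereal measure \<Rightarrow> real \<Rightarrow> ereal measure" where
  "bms_out P x = distr P borel (\<lambda>y. ereal x * y)"

definition sigma_rv :: "'a measure \<Rightarrow> ('a \<Rightarrow> 'b) \<Rightarrow> 'b measure \<Rightarrow> 'a measure" where
  "sigma_rv M Z N = vimage_algebra (space M) Z N"

definition cond_entropy_bits ::
    "'a measure \<Rightarrow> 'b set \<Rightarrow> ('a \<Rightarrow> 'b) \<Rightarrow> 'a measure \<Rightarrow> real" where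
  "cond_entropy_bits M A X F =
     (\<integral>\<omega>. (\<Sum>x\<in>A. (let p = real_cond_exp M F (indicator {\<eta>\<in>space M. X \<eta> = x}) \<omega>
                     in - p * log 2 p)) \<partial>M)"

definition bms_uniform_joint :: "ereal measure \<Rightarrow> (real \<times> ereal) measure" where
  "bms_uniform_joint P =
     distr (uniform_count_measure {-1, 1::real} \<Otimes>\<^sub>M P) (borel \<Otimes>\<^sub>M borel)
           (\<lambda>(x, y). (x, ereal x * y))"

definition bms_moment :: "ereal measure \<Rightarrow> nat \<Rightarrow> real" where
  "bms_moment P k =
     (let J = bms_uniform_joint P in
       \<integral>\<omega>. (real_cond_exp J (sigma_rv J snd borel) fst \<omega>) ^ (2 * k) \<partial>J)"

definition ck :: "nat \<Rightarrow> real" where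
  "ck k = 1 / (ln 2 * (2 * real k) * (2 * real k - 1))"

end

theory Submission
  imports Defs
begin


definition ent :: "real \<Rightarrow> real" where "ent p = - p * log 2 p"
definition Hb :: "real \<Rightarrow> real" where "Hb z = ent ((1+z)/2) + ent ((1-z)/2)"

lemma ck_Suc: "ck (Suc n) = 1 / (ln 2 * (2 * real n + 1) * (2 * real n + 2))"
  unfolding ck_def by (simp add: algebra_simps)

lemma ck_sums_1: "(\<lambda>k. ck (Suc k)) sums 1"
proof -
  have "(\<lambda>k. (inverse (real (2*k+1)) - inverse (real (2*k+2))) / ln 2) sums (ln 2 / ln 2)"
    by (rule sums_divide[OF alternating_harmonic_series_sums'])
  moreover have "(inverse (real (2*k+1)) - inverse (real (2*k+2))) / ln 2 = ck (Suc k)" for k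
    unfolding ck_Suc by (simp add: field_simps)
  ultimately show ?thesis by simp
qed

lemma phi_sums_open:
  fixes z :: real assumes z: "\<bar>z\<bar> < 1"
  shows "(\<lambda>k. ck (Suc k) * z^(2*Suc k)) sums ((ln (1 - z^2) + z * ln ((1+z)/(1-z))) / (2 * ln 2))"
proof -
  have z2: "\<bar>-(z^2)\<bar> < 1" using z by (simp add: abs_square_less_1)
  have "(\<lambda>n. - ((-(-(z^2)))^n) / of_nat n) sums ln (1 + -(z^2))"
    by (rule ln_series'[OF z2])
  hence "(\<lambda>n. - ((z^2)^n) / real n) sums ln (1 - z^2)" by simp
  hence s1: "(\<lambda>n. - ((z^2)^(Suc n)) / real (Suc n)) sums ln (1 - z^2)"
    by (subst sums_Suc_iff) simp
  have xpos: "(1+z)/(1-z) > 0" using z by (auto simp: abs_less_iff)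
  have q: "((1+z)/(1-z) - 1) / ((1+z)/(1-z) + 1) = z" using z
    by (auto simp: abs_less_iff field_simps)
  have s2: "(\<lambda>n. 2 * z ^ (2*n+1) / real (2*n+1)) sums ln ((1+z)/(1-z))"
    using ln_series_quadratic[OF xpos] unfolding q by simp
  have s3: "(\<lambda>n. z * (2 * z ^ (2*n+1) / real (2*n+1))) sums (z * ln ((1+z)/(1-z)))"
    by (rule sums_mult[OF s2])
  have s4: "(\<lambda>n. (- ((z^2)^(Suc n)) / real (Suc n) + z * (2 * z ^ (2*n+1) / real (2*n+1))) / (2 * ln 2))
      sums ((ln (1 - z^2) + z * ln ((1+z)/(1-z))) / (2 * ln 2))"
    by (rule sums_divide[OF sums_add[OF s1 s3]])
  have eq: "(- ((z^2)^(Suc n)) / real (Suc n) + z * (2 * z ^ (2*n+1) / real (2*n+1))) / (2 * ln 2)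
      = ck (Suc n) * z^(2*Suc n)" for n
  proof -
    define w where "w = z^(2*Suc n)"
    have e1: "(z^2)^(Suc n) = w" unfolding w_def by (simp only: power_mult)
    have e2: "z * (2 * z ^ (2*n+1) / real (2*n+1)) = 2 * w / real (2*n+1)" by (simp add: w_def)
    have "(- ((z^2)^(Suc n)) / real (Suc n) + z * (2 * z ^ (2*n+1) / real (2*n+1)))
        = w * (2 / (2 * real n + 1) - 1 / (real n + 1))"
      unfolding e1 e2 by (simp add: field_simps)
    also have "2 / (2 * real n + 1) - 1 / (real n + 1) = 1 / ((2 * real n + 1) * (real n + 1))"
      by (simp add: field_simps)
    finally have L: "(- ((z^2)^(Suc n)) / real (Suc n) + z * (2 * z ^ (2*n+1) / real (2*n+1)))
        = w * (1 / ((2 * real n + 1) * (real n + 1)))" .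
    show ?thesis unfolding L ck_Suc w_def[symmetric] by (simp add: field_simps)
  qed
  show ?thesis using s4 unfolding eq .
qed

lemma Hb_open:
  fixes z :: real assumes z: "\<bar>z\<bar> < 1"
  shows "1 - Hb z = (ln (1 - z^2) + z * ln ((1+z)/(1-z))) / (2 * ln 2)"
proof -
  have p: "1 + z > 0" "1 - z > 0" using z by (auto simp: abs_less_iff)
  have l1: "ln ((1+z)/2) = ln (1+z) - ln 2" using p by (simp add: ln_div)
  have l2: "ln ((1-z)/2) = ln (1-z) - ln 2" using p by (simp add: ln_div)
  have l3: "ln (1 - z^2) = ln (1+z) + ln (1-z)"
  proof -
    have "1 - z^2 = (1+z)*(1-z)" by (simp add: algebra_simps power2_eq_square)
    thus ?thesis using p by (simp add: ln_mult)
  qed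
  have l4: "ln ((1+z)/(1-z)) = ln (1+z) - ln (1-z)" using p by (simp add: ln_div)
  have ln2: "ln (2::real) > 0" by simp
  show ?thesis unfolding Hb_def ent_def log_def l1 l2 l3 l4
    using ln2 by (simp add: field_simps)
qed

lemma phi_sums:
  fixes z :: real assumes z: "\<bar>z\<bar> \<le> 1"
  shows "(\<lambda>k. ck (Suc k) * z^(2*Suc k)) sums (1 - Hb z)"
proof (cases "\<bar>z\<bar> < 1")
  case True thus ?thesis using phi_sums_open Hb_open by simp
next
  case False
  hence "z = 1 \<or> z = -1" using z by auto
  hence "z^(2*Suc k) = 1" for k by (auto simp: power_mult)
  moreover have "Hb z = 0" using \<open>z = 1 \<or> z = -1\<close> by (auto simp: Hb_def ent_def)
  ultimately show ?thesis using ck_sums_1 by simp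
qed

lemma ent_mult:
  fixes x y :: real assumes "x \<ge> 0" "y \<ge> 0"
  shows "ent (x*y) = x * ent y + y * ent x"
proof (cases "x = 0 \<or> y = 0")
  case True thus ?thesis by (auto simp: ent_def)
next
  case False
  hence "x > 0" "y > 0" using assms by auto
  thus ?thesis unfolding ent_def by (simp add: log_mult algebra_simps)
qed

lemma ent_div:
  fixes p s :: real assumes "p \<ge> 0" "s \<ge> 0" "s = 0 \<Longrightarrow> p = 0"
  shows "s * ent (p/s) = ent p + p * log 2 s"
proof (cases "p = 0")
  case True thus ?thesis by (simp add: ent_def)
next
  case False
  have "s \<noteq> 0" using assms False by blast
  hence "p > 0" "s > 0" using assms False by auto
  thus ?thesis unfolding ent_def by (simp add: log_divide algebra_simps)
qed

definition vpost :: "real \<Rightarrow> real \<Rightarrow> real \<Rightarrow> real" where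
  "vpost x m t = (1 + x*m) * (1 + x*t) / (2 * (1 + m*t))"

definition Kf :: "real \<Rightarrow> real \<Rightarrow> real" where
  "Kf m t = (1 + m*t) * (ent (vpost 1 m t) + ent (vpost (-1) m t))"

lemma Kf_half:
  fixes m t :: real assumes m: "\<bar>m\<bar> \<le> 1" and t: "\<bar>t\<bar> \<le> 1"
  shows "Kf m t = 2 * (ent ((1+m)/2 * ((1+t)/2)) + ent ((1 - (1+m)/2) * (1 - (1+t)/2)) - ent ((1+m*t)/2))"
proof -
  define a where "a = (1+m)/2"
  define b where "b = (1+t)/2"
  define s where "s = (1+m*t)/2"
  have a: "0 \<le> a" "a \<le> 1" using m by (auto simp: a_def abs_le_iff)
  have b: "0 \<le> b" "b \<le> 1" using t by (auto simp: b_def abs_le_iff)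
  have sab: "s = a*b + (1-a)*(1-b)" by (simp add: s_def a_def b_def field_simps)
  have s0: "s \<ge> 0" using a b sab by (simp add: mult_nonneg_nonneg)
  have p1: "a*b \<ge> 0" "(1-a)*(1-b) \<ge> 0" using a b by auto
  have z1: "s = 0 \<Longrightarrow> a*b = 0" "s = 0 \<Longrightarrow> (1-a)*(1-b) = 0" using sab p1 by linarith+
  have v1: "vpost 1 m t = (a*b)/s"
    by (cases "1+m*t = 0") (simp_all add: vpost_def a_def b_def s_def field_simps)
  have v2: "vpost (-1) m t = ((1-a)*(1-b))/s"
    by (cases "1+m*t = 0") (simp_all add: vpost_def a_def b_def s_def field_simps)
  have hms: "1 + m * t = 2 * s" by (simp add: s_def)
  have "Kf m t = 2 * (s * ent ((a*b)/s) + s * ent (((1-a)*(1-b))/s))"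
    unfolding Kf_def v1 v2 hms by (simp add: algebra_simps)
  also have "\<dots> = 2 * (ent (a*b) + a*b * log 2 s + (ent ((1-a)*(1-b)) + (1-a)*(1-b) * log 2 s))"
    using ent_div[OF p1(1) s0 z1(1)] ent_div[OF p1(2) s0 z1(2)] by simp
  also have "\<dots> = 2 * (ent (a*b) + ent ((1-a)*(1-b)) - ent s)"
    unfolding ent_def sab by (simp add: algebra_simps)
  finally show ?thesis
    by (simp add: a_def b_def s_def)
qed

lemma Kf_sym:
  fixes m t :: real assumes m: "\<bar>m\<bar> \<le> 1" and t: "\<bar>t\<bar> \<le> 1"
  shows "Kf m t + Kf m (-t) = 2 * (Hb m + Hb t - Hb (m*t))"
proof -
  define a where "a = (1+m)/2"
  define b where "b = (1+t)/2"
  define s where "s = (1+m*t)/2"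
  have a: "0 \<le> a" "a \<le> 1" using m by (auto simp: a_def abs_le_iff)
  have b: "0 \<le> b" "b \<le> 1" using t by (auto simp: b_def abs_le_iff)
  have t': "\<bar>-t\<bar> \<le> 1" using t by simp
  have k1: "Kf m t = 2*(ent(a*b) + ent((1-a)*(1-b)) - ent s)"
    using Kf_half[OF m t] by (simp add: a_def b_def s_def)
  have eqs: "(1 + -t)/2 = 1-b" "1 - (1 + -t)/2 = b" "(1 + m * -t)/2 = 1 - s"
    by (simp_all add: b_def s_def field_simps)
  have k2: "Kf m (-t) = 2*(ent(a*(1-b)) + ent((1-a)*b) - ent (1 - s))"
    using Kf_half[OF m t', unfolded eqs, folded a_def] by simp
  have h1: "Hb m = ent a + ent (1-a)" unfolding Hb_def a_def by (simp add: field_simps)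
  have h2: "Hb t = ent b + ent (1-b)" unfolding Hb_def b_def by (simp add: field_simps)
  have h3: "Hb (m*t) = ent s + ent (1-s)" unfolding Hb_def s_def by (simp add: field_simps)
  have a1: "0 \<le> 1-a" and b1: "0 \<le> 1 - b" using a b by auto
  show ?thesis
    unfolding k1 k2 h1 h2 h3 ent_mult[OF a(1) b(1)] ent_mult[OF a1 b1] ent_mult[OF a(1) b1] ent_mult[OF a1 b(1)]
    by (simp add: algebra_simps)
qed

lemma Hb_series:
  fixes m t :: real assumes m: "\<bar>m\<bar> \<le> 1" and t: "\<bar>t\<bar> \<le> 1"
  shows "(\<lambda>k. ck (Suc k) * (1 - m^(2*Suc k)) * (1 - t^(2*Suc k))) sums (Hb m + Hb t - Hb (m*t))"
proof -
  have mt: "\<bar>m*t\<bar> \<le> 1" using m t by (simp add: abs_mult mult_le_one)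
  have s: "(\<lambda>k. ck (Suc k) - ck (Suc k) * m^(2*Suc k) - ck (Suc k) * t^(2*Suc k) + ck (Suc k) * (m*t)^(2*Suc k))
     sums (1 - (1 - Hb m) - (1 - Hb t) + (1 - Hb (m*t)))"
    by (intro sums_add sums_diff ck_sums_1 phi_sums m t mt)
  have e: "1 - (1 - Hb m) - (1 - Hb t) + (1 - Hb (m*t)) = Hb m + Hb t - Hb (m*t)" by simp
  have eq: "(\<lambda>k. ck (Suc k) - ck (Suc k) * m^(2*Suc k) - ck (Suc k) * t^(2*Suc k) + ck (Suc k) * (m*t)^(2*Suc k))
      = (\<lambda>k. ck (Suc k) * (1 - m^(2*Suc k)) * (1 - t^(2*Suc k)))"
    by (rule ext) (simp add: algebra_simps power_mult_distrib)
  show ?thesis using s unfolding e eq .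
qed




lemma (in finite_measure) bint:
  fixes f :: "'a \<Rightarrow> real"
  assumes "f \<in> borel_measurable M" "\<And>x. x \<in> space M \<Longrightarrow> \<bar>f x\<bar> \<le> B"
  shows "integrable M f"
  using assms by (intro integrable_const_bound[where B=B] AE_I2) auto

lemma (in prob_space) int_bound:
  fixes f :: "'a \<Rightarrow> real"
  assumes "f \<in> borel_measurable M" "\<And>x. x \<in> space M \<Longrightarrow> \<bar>f x\<bar> \<le> B"
  shows "\<bar>\<integral>x. f x \<partial>M\<bar> \<le> B"
proof -
  have "\<bar>\<integral>x. f x \<partial>M\<bar> \<le> (\<integral>x. \<bar>f x\<bar> \<partial>M)"
    using integral_norm_bound[of M f] by simp
  also have "\<dots> \<le> (\<integral>x. B \<partial>M)"
  proof (rule integral_mono)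
    show "integrable M (\<lambda>x. \<bar>f x\<bar>)" by (rule bint[where B=B]) (use assms in auto)
  qed (use assms in auto)
  finally show ?thesis by (simp add: prob_space)
qed

lemma vpost_mul:
  fixes m t x :: real assumes m: "\<bar>m\<bar> \<le> 1" and t: "\<bar>t\<bar> \<le> 1" and x: "x \<in> {-1,1}"
  shows "vpost x m t * (1 + m*t) = (1 + x*m) * (1 + x*t) / 2"
proof (cases "1 + m*t = 0")
  case True
  have m2: "m^2 \<le> 1" and t2: "t^2 \<le> 1" using m t by (simp_all add: abs_le_square_iff[of _ 1, simplified])
  have "(m+t)^2 = m^2 + t^2 + 2*(m*t)" by (simp add: power2_eq_square algebra_simps)
  also have "\<dots> \<le> 0" using True m2 t2 by simp
  finally have "m + t = 0" by simp
  hence "t = -m" by simp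
  moreover have "m^2 = 1" using True \<open>t = -m\<close> by (simp add: power2_eq_square)
  ultimately show ?thesis using True x by (auto simp: vpost_def algebra_simps power2_eq_square)
next
  case False thus ?thesis by (simp add: vpost_def field_simps)
qed

lemma vpost_bounds:
  fixes m t x :: real assumes m: "\<bar>m\<bar> \<le> 1" and t: "\<bar>t\<bar> \<le> 1" and x: "x \<in> {-1,1}"
  shows "0 \<le> vpost x m t" "vpost x m t \<le> 1"
proof -
  have a: "0 \<le> 1 + x*m" "0 \<le> 1 - x*m" "0 \<le> 1 + x*t" "0 \<le> 1 - x*t"
    using m t x by (auto simp: abs_le_iff)
  have d: "0 \<le> 1 + m*t"
  proof -
    have "\<bar>m*t\<bar> \<le> 1" using m t by (simp add: abs_mult mult_le_one)
    thus ?thesis by (simp add: abs_le_iff)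
  qed
  have n: "0 \<le> (1 + x*m) * (1 + x*t)" using a by simp
  show "0 \<le> vpost x m t" unfolding vpost_def using n d by simp
  have "0 \<le> (1 - x*m) * (1 - x*t)" using a by simp
  hence le: "(1 + x*m) * (1 + x*t) \<le> 2 * (1 + m*t)" using x by (auto simp: algebra_simps)
  show "vpost x m t \<le> 1"
  proof (cases "1 + m*t = 0")
    case True thus ?thesis by (simp add: vpost_def)
  next
    case False hence "0 < 2 * (1 + m*t)" using d by simp
    thus ?thesis unfolding vpost_def using le by simp
  qed
qed

locale gen = prob_space M + S: prob_space S
  for M :: "'a measure" and S :: "ereal measure" +
  fixes X :: "'a \<Rightarrow> real" and Y :: "'a \<Rightarrow> ereal" and G F :: "'a measure" and m :: "'a \<Rightarrow> real"
    and \<tau> :: "ereal \<Rightarrow> real" and Q :: "real \<Rightarrow> ereal measure"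
  assumes X[measurable]: "X \<in> borel_measurable M" and Y[measurable]: "Y \<in> borel_measurable M"
  and Xv: "\<And>\<omega>. \<omega> \<in> space M \<Longrightarrow> X \<omega> \<in> {-1,1}"
  and subG: "subalgebra M G" and subF: "subalgebra M F"
  and m[measurable]: "m \<in> borel_measurable G" and mb: "\<And>\<omega>. \<omega> \<in> space M \<Longrightarrow> \<bar>m \<omega>\<bar> \<le> 1"
  and mprop: "\<And>h B. h \<in> borel_measurable G \<Longrightarrow> (\<And>\<omega>. \<omega> \<in> space M \<Longrightarrow> \<bar>h \<omega>\<bar> \<le> B) \<Longrightarrow>
       (\<integral>\<omega>. h \<omega> * X \<omega> \<partial>M) = (\<integral>\<omega>. h \<omega> * m \<omega> \<partial>M)"
  and sets_S[measurable_cong]: "sets S = sets (borel :: ereal measure)"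
  and \<tau>[measurable]: "\<tau> \<in> borel_measurable borel" and \<tau>b: "\<And>y. \<bar>\<tau> y\<bar> \<le> 1"
  and symS: "\<And>\<phi> :: real \<Rightarrow> real. \<phi> \<in> borel_measurable borel \<Longrightarrow> (\<integral>y. \<phi> (\<tau> y) \<partial>S) = (\<integral>y. \<phi> (- \<tau> y) \<partial>S)"
  and Q: "\<And>x. x \<in> {-1,1} \<Longrightarrow> Q x = density S (\<lambda>y. ennreal (1 + x * \<tau> y))"
  and markov: "\<And>x A B. x \<in> {-1,1} \<Longrightarrow> A \<in> sets (borel :: ereal measure) \<Longrightarrow> B \<in> sets G \<Longrightarrow>
      measure M {\<omega>\<in>space M. X \<omega> = x \<and> \<omega> \<in> B \<and> Y \<omega> \<in> A}
        = measure M {\<omega>\<in>space M. X \<omega> = x \<and> \<omega> \<in> B} * measure (Q x) A"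
  and Fgen: "sets F = sigma_sets (space M) {Y -` A \<inter> B | A B. A \<in> sets (borel :: ereal measure) \<and> B \<in> sets G}"
begin

lemma spG: "space G = space M" and setsG: "sets G \<subseteq> sets M"
  using subG by (auto simp: subalgebra_def)
lemma spF: "space F = space M" and setsF: "sets F \<subseteq> sets M"
  using subF by (auto simp: subalgebra_def)

lemma GinF: "sets G \<subseteq> sets F"
proof
  fix B assume B: "B \<in> sets G"
  hence "B \<subseteq> space M" using setsG sets.sets_into_space by blast
  hence e: "B = Y -` UNIV \<inter> B" by auto
  have "B \<in> {Y -` A \<inter> B | A B. A \<in> sets (borel :: ereal measure) \<and> B \<in> sets G}"
    by (rule CollectI, rule exI[of _ UNIV], rule exI[of _ B]) (use B e in simp)
  thus "B \<in> sets F" unfolding Fgen by (rule sigma_sets.Basic)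
qed

lemma subGF: "subalgebra F G" using GinF spG spF by (simp add: subalgebra_def)

lemma Y_F[measurable]: "Y \<in> borel_measurable F"
proof (rule measurableI)
  fix A :: "ereal set" assume "A \<in> sets borel"
  moreover have "space M \<in> sets G" using spG sets.top[of G] by simp
  ultimately have "Y -` A \<inter> space M \<in> {Y -` A \<inter> B | A B. A \<in> sets (borel :: ereal measure) \<and> B \<in> sets G}"
    by (intro CollectI exI[of _ A] exI[of _ "space M"]) simp
  thus "Y -` A \<inter> space F \<in> sets F" unfolding Fgen spF by (rule sigma_sets.Basic)
qed simp

lemma m_F[measurable]: "m \<in> borel_measurable F" by (rule measurable_from_subalg[OF subGF m])
lemma m_M[measurable]: "m \<in> borel_measurable M" by (rule measurable_from_subalg[OF subG m])

lemma Q_sets[measurable_cong]: "x \<in> {-1,1} \<Longrightarrow> sets (Q x) = sets (borel :: ereal measure)"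
  using Q sets_S by simp

lemma int_tau: "(\<integral>y. \<tau> y \<partial>S) = 0"
proof -
  have "(\<integral>y. \<tau> y \<partial>S) = (\<integral>y. - \<tau> y \<partial>S)"
    using symS[of "\<lambda>z. z"] by simp
  thus ?thesis by simp
qed

lemma tau_int[simp]: "integrable S \<tau>"
  by (rule S.integrable_const_bound[where B=1]) (auto simp: \<tau>b)

lemma dens_nn: assumes x: "x \<in> {-1,1}" shows "0 \<le> 1 + x * \<tau> y"
proof -
  have "\<bar>x * \<tau> y\<bar> \<le> 1" using x \<tau>b[of y] by (auto simp: abs_mult)
  thus ?thesis by (simp add: abs_le_iff)
qed

lemma dens_le: assumes x: "x \<in> {-1,1}" shows "1 + x * \<tau> y \<le> 2"
proof -
  have "\<bar>x * \<tau> y\<bar> \<le> 1" using x \<tau>b[of y] by (auto simp: abs_mult)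
  thus ?thesis by (simp add: abs_le_iff)
qed

lemma Q_emeasure: assumes x: "x \<in> {-1,1}" and A: "A \<in> sets (borel :: ereal measure)"
  shows "emeasure (Q x) A = ennreal (\<integral>y. indicator A y * (1 + x * \<tau> y) \<partial>S)"
proof -
  have A': "A \<in> sets S" using A sets_S by simp
  have "emeasure (Q x) A = (\<integral>\<^sup>+y. ennreal (1 + x * \<tau> y) * indicator A y \<partial>S)"
    unfolding Q[OF x] by (rule emeasure_density[OF _ A']) measurable
  also have "\<dots> = (\<integral>\<^sup>+y. ennreal (indicator A y * (1 + x * \<tau> y)) \<partial>S)"
    by (intro nn_integral_cong) (simp add: indicator_def)
  also have "\<dots> = ennreal (\<integral>y. indicator A y * (1 + x * \<tau> y) \<partial>S)"
  proof (rule nn_integral_eq_integral)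
    show "integrable S (\<lambda>y. indicator A y * (1 + x * \<tau> y))"
    proof (rule S.integrable_const_bound[where B=2])
      show "AE y in S. norm (indicator A y * (1 + x * \<tau> y)) \<le> 2"
        using dens_nn[OF x] dens_le[OF x] by (simp add: indicator_def)
    qed (use A in measurable)
    show "AE y in S. 0 \<le> indicator A y * (1 + x * \<tau> y)"
      using dens_nn[OF x] by (simp add: indicator_def)
  qed
  finally show ?thesis .
qed

lemma Q_measure: assumes x: "x \<in> {-1,1}" and A: "A \<in> sets (borel :: ereal measure)"
  shows "measure (Q x) A = (\<integral>y. indicator A y * (1 + x * \<tau> y) \<partial>S)"
proof -
  have "0 \<le> (\<integral>y. indicator A y * (1 + x * \<tau> y) \<partial>S)"
    using dens_nn[OF x] by (intro integral_nonneg_AE) (simp add: indicator_def)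
  thus ?thesis using Q_emeasure[OF x A] by (simp add: measure_def)
qed

lemma Q_prob: assumes x: "x \<in> {-1,1}" shows "prob_space (Q x)"
proof
  have sp: "space (Q x) = UNIV" using sets_eq_imp_space_eq[OF Q_sets[OF x]] by simp
  have "emeasure (Q x) UNIV = ennreal (\<integral>y. indicator UNIV y * (1 + x * \<tau> y) \<partial>S)"
    using Q_emeasure[OF x, of UNIV] by simp
  also have "(\<integral>y. indicator UNIV y * (1 + x * \<tau> y) \<partial>S) = (\<integral>y. 1 + x * \<tau> y \<partial>S)"
    by simp
  also have "\<dots> = 1"
    using int_tau by (simp add: S.prob_space)
  finally show "emeasure (Q x) (space (Q x)) = 1"
    unfolding sp by simp
qed

definition Ix :: "real \<Rightarrow> 'a set" where "Ix x = {\<omega>\<in>space M. X \<omega> = x}"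
definition DM :: "real \<Rightarrow> 'a measure" where "DM x = density M (indicator (Ix x))"
definition L :: "real \<Rightarrow> 'a measure" where "L x = distr (DM x) G (\<lambda>\<omega>. \<omega>)"
definition Jx :: "real \<Rightarrow> ('a \<times> ereal) measure" where
  "Jx x = distr (DM x) (G \<Otimes>\<^sub>M borel) (\<lambda>\<omega>. (\<omega>, Y \<omega>))"

lemma Ix_sets[measurable]: "Ix x \<in> sets M" unfolding Ix_def by measurable

lemma sets_DM[measurable_cong]: "sets (DM x) = sets M" unfolding DM_def by simp
lemma space_DM: "space (DM x) = space M" unfolding DM_def by simp

lemma id_DM_G[measurable]: "(\<lambda>\<omega>. \<omega>) \<in> measurable (DM x) G"
proof (rule measurableI)
  fix A assume "A \<in> sets G"
  hence "A \<in> sets M" using setsG by blast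
  moreover have "A \<subseteq> space M" using calculation sets.sets_into_space by blast
  ultimately show "(\<lambda>\<omega>. \<omega>) -` A \<inter> space (DM x) \<in> sets (DM x)"
    by (simp add: space_DM sets_DM Int_absorb2)
qed (simp add: space_DM spG)

lemma id_M_G[measurable]: "(\<lambda>\<omega>. \<omega>) \<in> measurable M G"
  using id_DM_G[of 0] by (simp add: measurable_def space_DM sets_DM)

lemma pairY[measurable]: "(\<lambda>\<omega>. (\<omega>, Y \<omega>)) \<in> measurable (DM x) (G \<Otimes>\<^sub>M borel)"
proof (rule measurable_Pair)
  show "(\<lambda>\<omega>. \<omega>) \<in> measurable (DM x) G" by (rule id_DM_G)
  show "Y \<in> measurable (DM x) borel" by (simp add: measurable_cong_sets[OF sets_DM refl])
qed

lemma emeasure_DM: "A \<in> sets M \<Longrightarrow> emeasure (DM x) A = emeasure M (Ix x \<inter> A)"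
  unfolding DM_def by (rule emeasure_restricted[OF Ix_sets])

lemma sets_L[measurable_cong]: "sets (L x) = sets G" unfolding L_def by simp

lemma L_emeasure: "A \<in> sets G \<Longrightarrow> emeasure (L x) A = emeasure M (Ix x \<inter> A)"
proof -
  assume A: "A \<in> sets G"
  hence AM: "A \<in> sets M" using setsG by blast
  hence "A \<subseteq> space M" using sets.sets_into_space by blast
  hence "(\<lambda>\<omega>. \<omega>) -` A \<inter> space (DM x) = A" by (auto simp: space_DM)
  thus ?thesis unfolding L_def using A AM by (simp add: emeasure_distr emeasure_DM)
qed

lemma L_finite: "finite_measure (L x)"
proof
  have "space (L x) = space M" unfolding L_def by (simp add: spG)
  moreover have "emeasure (L x) (space M) = emeasure M (Ix x \<inter> space M)"
    using L_emeasure[of "space M"] spG sets.top[of G] by simp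
  ultimately show "emeasure (L x) (space (L x)) \<noteq> \<infinity>" by (simp add: emeasure_eq_measure)
qed

lemma Jx_prod: assumes x: "x \<in> {-1,1}" shows "L x \<Otimes>\<^sub>M Q x = Jx x"
proof (rule pair_measure_eqI)
  interpret Qx: prob_space "Q x" by (rule Q_prob[OF x])
  interpret Lx: finite_measure "L x" by (rule L_finite)
  show "sigma_finite_measure (L x)" by unfold_locales
  show "sigma_finite_measure (Q x)" by unfold_locales
  show "sets (L x \<Otimes>\<^sub>M Q x) = sets (Jx x)"
    unfolding Jx_def by (simp add: sets_pair_measure_cong[OF sets_L Q_sets[OF x]])
  fix A B assume A: "A \<in> sets (L x)" and B: "B \<in> sets (Q x)"
  hence AG: "A \<in> sets G" and Bb: "B \<in> sets (borel :: ereal measure)"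
    using sets_L Q_sets[OF x] by auto
  hence AM: "A \<in> sets M" using setsG by blast
  have AxB: "A \<times> B \<in> sets (G \<Otimes>\<^sub>M borel)" using AG Bb by simp
  have e1: "emeasure (Jx x) (A \<times> B) = emeasure M (Ix x \<inter> ((\<lambda>\<omega>. (\<omega>, Y \<omega>)) -` (A \<times> B) \<inter> space M))"
    unfolding Jx_def using AxB
    by (simp add: emeasure_distr[OF pairY AxB] space_DM emeasure_DM)
  have s1: "Ix x \<inter> ((\<lambda>\<omega>. (\<omega>, Y \<omega>)) -` (A \<times> B) \<inter> space M) = {\<omega>\<in>space M. X \<omega> = x \<and> \<omega> \<in> A \<and> Y \<omega> \<in> B}"
    unfolding Ix_def by auto
  have s2: "Ix x \<inter> A = {\<omega>\<in>space M. X \<omega> = x \<and> \<omega> \<in> A}"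
    unfolding Ix_def by auto
  have mk: "measure M {\<omega>\<in>space M. X \<omega> = x \<and> \<omega> \<in> A \<and> Y \<omega> \<in> B}
        = measure M {\<omega>\<in>space M. X \<omega> = x \<and> \<omega> \<in> A} * measure (Q x) B"
    by (rule markov[OF x Bb AG])
  show "emeasure (L x) A * emeasure (Q x) B = emeasure (Jx x) (A \<times> B)"
    unfolding e1 s1 L_emeasure[OF AG] s2
    by (simp add: emeasure_eq_measure Qx.emeasure_eq_measure mk ennreal_mult)
qed

lemma DM_finite: "finite_measure (DM x)"
proof
  show "emeasure (DM x) (space (DM x)) \<noteq> \<infinity>"
    by (simp add: space_DM emeasure_DM emeasure_eq_measure)
qed

lemma Jx_finite: "finite_measure (Jx x)"
  unfolding Jx_def by (rule finite_measure.finite_measure_distr[OF DM_finite pairY])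

lemma space_Jx: "space (Jx x) = space M \<times> UNIV"
  unfolding Jx_def by (simp add: space_pair_measure spG)

lemma int_DM: fixes f :: "'a \<Rightarrow> real" assumes f: "f \<in> borel_measurable M"
  shows "(\<integral>\<omega>. f \<omega> \<partial>DM x) = (\<integral>\<omega>. indicator (Ix x) \<omega> * f \<omega> \<partial>M)"
proof -
  have "DM x = density M (\<lambda>\<omega>. ennreal (indicator (Ix x) \<omega>))"
    unfolding DM_def by (simp add: ennreal_indicator)
  moreover have "integral\<^sup>L (density M (\<lambda>\<omega>. ennreal (indicator (Ix x) \<omega>))) f
      = (\<integral>\<omega>. indicator (Ix x) \<omega> *\<^sub>R f \<omega> \<partial>M)"
    using integral_density[of f M "indicator (Ix x)"] f by simp
  ultimately show ?thesis by simp
qed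

lemma ind_Ix: assumes x: "x \<in> {-1,1}" and w: "\<omega> \<in> space M"
  shows "indicator (Ix x) \<omega> = (1 + x * X \<omega>) / (2::real)"
  using x Xv[OF w] w by (auto simp: Ix_def indicator_def)

lemma disint1:
  assumes x: "x \<in> {-1,1}" and g[measurable]: "g \<in> borel_measurable (G \<Otimes>\<^sub>M borel)"
    and gb: "\<And>\<omega> y. \<omega> \<in> space M \<Longrightarrow> \<bar>g (\<omega>, y)\<bar> \<le> B"
  shows "(\<integral>\<omega>. indicator (Ix x) \<omega> * g (\<omega>, Y \<omega>) \<partial>M)
       = (\<integral>\<omega>. (\<integral>y. g (\<omega>, y) * (1 + x * \<tau> y) \<partial>S) * ((1 + x * m \<omega>) / 2) \<partial>M)"
proof -
  interpret Qx: prob_space "Q x" by (rule Q_prob[OF x])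
  interpret Lx: finite_measure "L x" by (rule L_finite)
  interpret P: pair_sigma_finite "L x" "Q x" by unfold_locales
  interpret JJ: finite_measure "Jx x" by (rule Jx_finite)
  have B0: "0 \<le> B" using gb[of "SOME \<omega>. \<omega> \<in> space M" undefined] not_empty some_in_eq
    by (metis abs_ge_zero order_trans)
  define h where "h \<omega> = (\<integral>y. g (\<omega>, y) * (1 + x * \<tau> y) \<partial>S)" for \<omega>
  have h_meas[measurable]: "h \<in> borel_measurable G" unfolding h_def by measurable
  have h_M[measurable]: "h \<in> borel_measurable M" by (rule measurable_from_subalg[OF subG h_meas])
  have hb: "\<bar>h \<omega>\<bar> \<le> 2 * B" if w: "\<omega> \<in> space M" for \<omega>
    unfolding h_def
  proof (rule S.int_bound)
    show "(\<lambda>y. g (\<omega>, y) * (1 + x * \<tau> y)) \<in> borel_measurable S"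
      using w spG by measurable
    fix y have "\<bar>g (\<omega>, y) * (1 + x * \<tau> y)\<bar> = \<bar>g (\<omega>, y)\<bar> * (1 + x * \<tau> y)"
      using dens_nn[OF x] by (simp add: abs_mult)
    also have "\<dots> \<le> B * 2" using gb[OF w] dens_nn[OF x] dens_le[OF x] B0
      by (intro mult_mono) auto
    finally show "\<bar>g (\<omega>, y) * (1 + x * \<tau> y)\<bar> \<le> 2 * B" by simp
  qed
  have gint: "integrable (L x \<Otimes>\<^sub>M Q x) g"
    unfolding Jx_prod[OF x]
  proof (rule JJ.bint[where B=B])
    show "g \<in> borel_measurable (Jx x)" unfolding Jx_def by simp
    fix z assume "z \<in> space (Jx x)" thus "\<bar>g z\<bar> \<le> B" using gb by (cases z) (auto simp: space_Jx)
  qed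
  have "(\<integral>\<omega>. indicator (Ix x) \<omega> * g (\<omega>, Y \<omega>) \<partial>M) = (\<integral>\<omega>. g (\<omega>, Y \<omega>) \<partial>DM x)"
  proof (rule int_DM[symmetric])
    show "(\<lambda>\<omega>. g (\<omega>, Y \<omega>)) \<in> borel_measurable M"
      using measurable_comp[OF pairY[of x] g] by (simp add: measurable_cong_sets[OF sets_DM refl] o_def)
  qed
  also have "\<dots> = (\<integral>z. g z \<partial>Jx x)"
    unfolding Jx_def by (rule integral_distr[symmetric, OF pairY g])
  also have "\<dots> = (\<integral>z. g z \<partial>(L x \<Otimes>\<^sub>M Q x))" by (simp add: Jx_prod[OF x])
  also have "\<dots> = (\<integral>\<omega>. (\<integral>y. g (\<omega>, y) \<partial>Q x) \<partial>L x)"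
    by (rule P.integral_fst'[OF gint, symmetric])
  also have "\<dots> = (\<integral>\<omega>. h \<omega> \<partial>L x)"
  proof (rule Bochner_Integration.integral_cong[OF refl])
    fix \<omega> assume "\<omega> \<in> space (L x)"
    hence w: "\<omega> \<in> space M" unfolding L_def by (simp add: spG)
    have "(\<integral>y. g (\<omega>, y) \<partial>Q x) = (\<integral>y. (1 + x * \<tau> y) *\<^sub>R g (\<omega>, y) \<partial>S)"
      unfolding Q[OF x]
    proof (rule integral_density)
      show "(\<lambda>y. g (\<omega>, y)) \<in> borel_measurable S" using w spG by measurable
    qed (use dens_nn[OF x] in auto)
    thus "(\<integral>y. g (\<omega>, y) \<partial>Q x) = h \<omega>" unfolding h_def by (simp add: mult.commute)
  qed
  also have "\<dots> = (\<integral>\<omega>. h \<omega> \<partial>DM x)"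
    unfolding L_def by (rule integral_distr[OF id_DM_G h_meas])
  also have "\<dots> = (\<integral>\<omega>. indicator (Ix x) \<omega> * h \<omega> \<partial>M)"
    by (rule int_DM[OF h_M])
  also have "\<dots> = (\<integral>\<omega>. h \<omega> / 2 + x / 2 * (h \<omega> * X \<omega>) \<partial>M)"
    by (rule Bochner_Integration.integral_cong[OF refl]) (simp add: ind_Ix[OF x] field_simps)
  also have "\<dots> = (\<integral>\<omega>. h \<omega> / 2 \<partial>M) + x / 2 * (\<integral>\<omega>. h \<omega> * X \<omega> \<partial>M)"
  proof -
    have i1: "integrable M (\<lambda>\<omega>. h \<omega> / 2)"
    proof (rule bint[where B=B])
      fix \<omega> assume "\<omega> \<in> space M" from hb[OF this] show "\<bar>h \<omega> / 2\<bar> \<le> B" by simp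
    qed simp
    have i2: "integrable M (\<lambda>\<omega>. h \<omega> * X \<omega>)"
    proof (rule bint[where B="2*B"])
      fix \<omega> assume w: "\<omega> \<in> space M"
      have "\<bar>X \<omega>\<bar> = 1" using Xv[OF w] by auto
      thus "\<bar>h \<omega> * X \<omega>\<bar> \<le> 2 * B" using hb[OF w] by (simp add: abs_mult)
    qed simp
    show ?thesis using i1 i2 by simp
  qed
  also have "(\<integral>\<omega>. h \<omega> * X \<omega> \<partial>M) = (\<integral>\<omega>. h \<omega> * m \<omega> \<partial>M)"
    by (rule mprop[OF h_meas hb])
  also have "(\<integral>\<omega>. h \<omega> / 2 \<partial>M) + x / 2 * (\<integral>\<omega>. h \<omega> * m \<omega> \<partial>M)
      = (\<integral>\<omega>. h \<omega> / 2 + x / 2 * (h \<omega> * m \<omega>) \<partial>M)"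
  proof -
    have i1: "integrable M (\<lambda>\<omega>. h \<omega> / 2)"
    proof (rule bint[where B=B])
      fix \<omega> assume "\<omega> \<in> space M" from hb[OF this] show "\<bar>h \<omega> / 2\<bar> \<le> B" by simp
    qed simp
    have i2: "integrable M (\<lambda>\<omega>. h \<omega> * m \<omega>)"
    proof (rule bint[where B="2*B"])
      fix \<omega> assume w: "\<omega> \<in> space M"
      have "\<bar>h \<omega> * m \<omega>\<bar> \<le> 2 * B * 1" unfolding abs_mult
        using hb[OF w] mb[OF w] by (intro mult_mono) auto
      thus "\<bar>h \<omega> * m \<omega>\<bar> \<le> 2 * B" by simp
    qed simp
    show ?thesis using i1 i2 by simp
  qed
  also have "\<dots> = (\<integral>\<omega>. h \<omega> * ((1 + x * m \<omega>) / 2) \<partial>M)"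
    by (rule Bochner_Integration.integral_cong[OF refl]) (simp add: field_simps)
  finally show ?thesis unfolding h_def .
qed

lemma disint:
  assumes g[measurable]: "g \<in> borel_measurable (G \<Otimes>\<^sub>M borel)"
    and gb: "\<And>\<omega> y. \<omega> \<in> space M \<Longrightarrow> \<bar>g (\<omega>, y)\<bar> \<le> B"
  shows "(\<integral>\<omega>. g (\<omega>, Y \<omega>) \<partial>M) = (\<integral>\<omega>. (\<integral>y. g (\<omega>, y) * (1 + m \<omega> * \<tau> y) \<partial>S) \<partial>M)"
proof -
  have gM[measurable]: "(\<lambda>\<omega>. g (\<omega>, Y \<omega>)) \<in> borel_measurable M"
    using measurable_comp[OF pairY[of 0] g] by (simp add: measurable_cong_sets[OF sets_DM refl] o_def)
  have B0: "0 \<le> B" using gb[of "SOME \<omega>. \<omega> \<in> space M" undefined] not_empty some_in_eq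
    by (metis abs_ge_zero order_trans)
  define I0 where "I0 \<omega> = (\<integral>y. g (\<omega>, y) \<partial>S)" for \<omega>
  define I1 where "I1 \<omega> = (\<integral>y. g (\<omega>, y) * \<tau> y \<partial>S)" for \<omega>
  have lin: "(\<integral>y. g (\<omega>, y) * (1 + c * \<tau> y) \<partial>S) = I0 \<omega> + c * I1 \<omega>" if w: "\<omega> \<in> space M" for \<omega> c
  proof -
    have i0: "integrable S (\<lambda>y. g (\<omega>, y))"
      by (rule S.bint[where B=B]) (use w spG gb in auto)
    have i1: "integrable S (\<lambda>y. g (\<omega>, y) * \<tau> y)"
    proof (rule S.bint[where B=B])
      fix y have "\<bar>g (\<omega>, y) * \<tau> y\<bar> \<le> B * 1" unfolding abs_mult
        using gb[OF w] \<tau>b[of y] B0 by (intro mult_mono) auto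
      thus "\<bar>g (\<omega>, y) * \<tau> y\<bar> \<le> B" by simp
    qed (use w spG in measurable)
    have "(\<integral>y. g (\<omega>, y) * (1 + c * \<tau> y) \<partial>S) = (\<integral>y. g (\<omega>, y) + c * (g (\<omega>, y) * \<tau> y) \<partial>S)"
      by (simp add: algebra_simps)
    also have "\<dots> = I0 \<omega> + c * I1 \<omega>" unfolding I0_def I1_def using i0 i1 by simp
    finally show ?thesis .
  qed
  have ind: "g (\<omega>, Y \<omega>) = indicator (Ix 1) \<omega> * g (\<omega>, Y \<omega>) + indicator (Ix (-1)) \<omega> * g (\<omega>, Y \<omega>)"
    if w: "\<omega> \<in> space M" for \<omega>
    using Xv[OF w] w by (auto simp: Ix_def indicator_def)
  have intg: "integrable M (\<lambda>\<omega>. indicator (Ix x) \<omega> * g (\<omega>, Y \<omega>))" for x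
  proof (rule bint[where B=B])
    fix \<omega> assume w: "\<omega> \<in> space M"
    show "\<bar>indicator (Ix x) \<omega> * g (\<omega>, Y \<omega>)\<bar> \<le> B" using gb[OF w] B0 by (simp add: indicator_def)
  qed simp
  have "(\<integral>\<omega>. g (\<omega>, Y \<omega>) \<partial>M) = (\<integral>\<omega>. indicator (Ix 1) \<omega> * g (\<omega>, Y \<omega>) + indicator (Ix (-1)) \<omega> * g (\<omega>, Y \<omega>) \<partial>M)"
    by (rule Bochner_Integration.integral_cong[OF refl]) (rule ind)
  also have "\<dots> = (\<integral>\<omega>. indicator (Ix 1) \<omega> * g (\<omega>, Y \<omega>) \<partial>M) + (\<integral>\<omega>. indicator (Ix (-1)) \<omega> * g (\<omega>, Y \<omega>) \<partial>M)"
    using intg[of 1] intg[of "-1"] by simp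
  also have "\<dots> = (\<integral>\<omega>. (\<integral>y. g (\<omega>, y) * (1 + 1 * \<tau> y) \<partial>S) * ((1 + 1 * m \<omega>) / 2) \<partial>M)
     + (\<integral>\<omega>. (\<integral>y. g (\<omega>, y) * (1 + (-1) * \<tau> y) \<partial>S) * ((1 + (-1) * m \<omega>) / 2) \<partial>M)"
    using disint1[of 1 g B] disint1[of "-1" g B] gb by simp
  also have "\<dots> = (\<integral>\<omega>. (\<integral>y. g (\<omega>, y) * (1 + 1 * \<tau> y) \<partial>S) * ((1 + 1 * m \<omega>) / 2)
     + (\<integral>y. g (\<omega>, y) * (1 + (-1) * \<tau> y) \<partial>S) * ((1 + (-1) * m \<omega>) / 2) \<partial>M)"
  proof -
    have "integrable M (\<lambda>\<omega>. (\<integral>y. g (\<omega>, y) * (1 + c * \<tau> y) \<partial>S) * ((1 + c * m \<omega>) / 2))"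
      if c: "c \<in> {-1, 1}" for c
    proof (rule bint[where B="2*B"])
      fix \<omega> assume w: "\<omega> \<in> space M"
      have a1: "\<bar>(\<integral>y. g (\<omega>, y) * (1 + c * \<tau> y) \<partial>S)\<bar> \<le> 2 * B"
      proof (rule S.int_bound)
        fix y
        have "\<bar>g (\<omega>, y) * (1 + c * \<tau> y)\<bar> = \<bar>g (\<omega>, y)\<bar> * (1 + c * \<tau> y)"
          using dens_nn[OF c] by (simp add: abs_mult)
        also have "\<dots> \<le> B * 2" using gb[OF w] dens_nn[OF c] dens_le[OF c] B0
          by (intro mult_mono) auto
        finally show "\<bar>g (\<omega>, y) * (1 + c * \<tau> y)\<bar> \<le> 2 * B" by simp
      qed (use w spG in measurable)
      have a2: "\<bar>(1 + c * m \<omega>) / 2\<bar> \<le> 1" using c mb[OF w] by (auto simp: abs_le_iff)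
      have "\<bar>(\<integral>y. g (\<omega>, y) * (1 + c * \<tau> y) \<partial>S) * ((1 + c * m \<omega>) / 2)\<bar> \<le> 2 * B * 1"
        unfolding abs_mult[of _ "(1 + c * m \<omega>) / 2"] using a1 a2 B0 by (intro mult_mono) auto
      thus "\<bar>(\<integral>y. g (\<omega>, y) * (1 + c * \<tau> y) \<partial>S) * ((1 + c * m \<omega>) / 2)\<bar> \<le> 2 * B" by simp
    qed measurable
    from this[of 1] this[of "-1"] show ?thesis by simp
  qed
  also have "\<dots> = (\<integral>\<omega>. (\<integral>y. g (\<omega>, y) * (1 + m \<omega> * \<tau> y) \<partial>S) \<partial>M)"
  proof (rule Bochner_Integration.integral_cong[OF refl])
    fix \<omega> assume w: "\<omega> \<in> space M"
    show "(\<integral>y. g (\<omega>, y) * (1 + 1 * \<tau> y) \<partial>S) * ((1 + 1 * m \<omega>) / 2)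
     + (\<integral>y. g (\<omega>, y) * (1 + (-1) * \<tau> y) \<partial>S) * ((1 + (-1) * m \<omega>) / 2)
     = (\<integral>y. g (\<omega>, y) * (1 + m \<omega> * \<tau> y) \<partial>S)"
      unfolding lin[OF w] by (simp add: field_simps)
  qed
  finally show ?thesis .
qed

end



context gen begin

lemma emF:
  fixes f :: "'a \<Rightarrow> real"
  assumes f[measurable]: "f \<in> borel_measurable M" and fnn: "\<And>\<omega>. \<omega> \<in> space M \<Longrightarrow> 0 \<le> f \<omega>"
    and fb: "\<And>\<omega>. \<omega> \<in> space M \<Longrightarrow> f \<omega> \<le> 1" and A: "A \<in> sets M"
  shows "emeasure (density M (\<lambda>\<omega>. ennreal (f \<omega>))) A = ennreal (\<integral>\<omega>. f \<omega> * indicator A \<omega> \<partial>M)"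
proof -
  have "emeasure (density M (\<lambda>\<omega>. ennreal (f \<omega>))) A = (\<integral>\<^sup>+\<omega>. ennreal (f \<omega>) * indicator A \<omega> \<partial>M)"
    by (rule emeasure_density[OF _ A]) simp
  also have "\<dots> = (\<integral>\<^sup>+\<omega>. ennreal (f \<omega> * indicator A \<omega>) \<partial>M)"
    by (intro nn_integral_cong) (simp add: indicator_def)
  also have "\<dots> = ennreal (\<integral>\<omega>. f \<omega> * indicator A \<omega> \<partial>M)"
  proof (rule nn_integral_eq_integral)
    show "integrable M (\<lambda>\<omega>. f \<omega> * indicator A \<omega>)"
    proof (rule bint[where B=1])
      fix \<omega> assume "\<omega> \<in> space M" thus "\<bar>f \<omega> * indicator A \<omega>\<bar> \<le> 1"
        using fnn fb by (simp add: indicator_def)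
    qed (use A in measurable)
    show "AE \<omega> in M. 0 \<le> f \<omega> * indicator A \<omega>" using fnn by (intro AE_I2) (simp add: indicator_def)
  qed
  finally show ?thesis .
qed

lemma ce_gen:
  assumes x0: "x0 \<in> {-1,1}" and A: "A \<in> sets (borel :: ereal measure)" and B: "B \<in> sets G"
  shows "(\<integral>\<omega>. indicator (Ix x0) \<omega> * indicator (Y -` A \<inter> B) \<omega> \<partial>M)
       = (\<integral>\<omega>. vpost x0 (m \<omega>) (\<tau> (Y \<omega>)) * indicator (Y -` A \<inter> B) \<omega> \<partial>M)"
proof -
  note [measurable] = A B
  define g :: "'a \<times> ereal \<Rightarrow> real" where "g z = indicator B (fst z) * indicator A (snd z)" for z
  have g[measurable]: "g \<in> borel_measurable (G \<Otimes>\<^sub>M borel)" unfolding g_def by measurable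
  have gb: "\<bar>g (\<omega>, y)\<bar> \<le> 1" for \<omega> y by (simp add: g_def indicator_def)
  define g' where "g' z = vpost x0 (m (fst z)) (\<tau> (snd z)) * g z" for z :: "'a \<times> ereal"
  have g'[measurable]: "g' \<in> borel_measurable (G \<Otimes>\<^sub>M borel)" unfolding g'_def vpost_def by measurable
  have g'b: "\<bar>g' (\<omega>, y)\<bar> \<le> 1" if w: "\<omega> \<in> space M" for \<omega> y
    using vpost_bounds[OF mb[OF w] \<tau>b[of y] x0] by (simp add: g'_def g_def indicator_def)
  have ind: "indicator (Y -` A \<inter> B) \<omega> = g (\<omega>, Y \<omega>)" for \<omega>
    by (auto simp: g_def indicator_def)
  have "(\<integral>\<omega>. indicator (Ix x0) \<omega> * indicator (Y -` A \<inter> B) \<omega> \<partial>M)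
      = (\<integral>\<omega>. indicator (Ix x0) \<omega> * g (\<omega>, Y \<omega>) \<partial>M)" unfolding ind ..
  also have "\<dots> = (\<integral>\<omega>. (\<integral>y. g (\<omega>, y) * (1 + x0 * \<tau> y) \<partial>S) * ((1 + x0 * m \<omega>) / 2) \<partial>M)"
    by (rule disint1[OF x0 g, of 1]) (rule gb)
  also have "\<dots> = (\<integral>\<omega>. (\<integral>y. g' (\<omega>, y) * (1 + m \<omega> * \<tau> y) \<partial>S) \<partial>M)"
  proof (rule Bochner_Integration.integral_cong[OF refl])
    fix \<omega> assume w: "\<omega> \<in> space M"
    have "(\<integral>y. g' (\<omega>, y) * (1 + m \<omega> * \<tau> y) \<partial>S) = (\<integral>y. g (\<omega>, y) * (1 + x0 * \<tau> y) * ((1 + x0 * m \<omega>) / 2) \<partial>S)"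
    proof (rule Bochner_Integration.integral_cong[OF refl])
      fix y
      have "vpost x0 (m \<omega>) (\<tau> y) * (1 + m \<omega> * \<tau> y) = (1 + x0 * m \<omega>) * (1 + x0 * \<tau> y) / 2"
        by (rule vpost_mul[OF mb[OF w] \<tau>b[of y] x0])
      hence "g' (\<omega>, y) * (1 + m \<omega> * \<tau> y) = g (\<omega>, y) * ((1 + x0 * m \<omega>) * (1 + x0 * \<tau> y) / 2)"
        unfolding g'_def by (simp add: mult.assoc)
      also have "\<dots> = g (\<omega>, y) * (1 + x0 * \<tau> y) * ((1 + x0 * m \<omega>) / 2)"
        by (simp add: field_simps)
      finally show "g' (\<omega>, y) * (1 + m \<omega> * \<tau> y) = g (\<omega>, y) * (1 + x0 * \<tau> y) * ((1 + x0 * m \<omega>) / 2)" .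
    qed
    also have "\<dots> = (\<integral>y. g (\<omega>, y) * (1 + x0 * \<tau> y) \<partial>S) * ((1 + x0 * m \<omega>) / 2)"
      by (rule integral_mult_left_zero)
    finally show "(\<integral>y. g (\<omega>, y) * (1 + x0 * \<tau> y) \<partial>S) * ((1 + x0 * m \<omega>) / 2)
        = (\<integral>y. g' (\<omega>, y) * (1 + m \<omega> * \<tau> y) \<partial>S)" by simp
  qed
  also have "\<dots> = (\<integral>\<omega>. g' (\<omega>, Y \<omega>) \<partial>M)"
    by (rule disint[OF g' g'b, symmetric])
  also have "\<dots> = (\<integral>\<omega>. vpost x0 (m \<omega>) (\<tau> (Y \<omega>)) * indicator (Y -` A \<inter> B) \<omega> \<partial>M)"
    unfolding ind g'_def by simp
  finally show ?thesis .
qed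

definition Egen :: "'a set set" where
  "Egen = {Y -` A \<inter> B | A B. A \<in> sets (borel :: ereal measure) \<and> B \<in> sets G}"

lemma Egen_stable: "Int_stable Egen"
proof (rule Int_stableI)
  fix a b assume "a \<in> Egen" "b \<in> Egen"
  then obtain A1 B1 A2 B2 where a: "a = Y -` A1 \<inter> B1" "A1 \<in> sets (borel :: ereal measure)" "B1 \<in> sets G"
    and b: "b = Y -` A2 \<inter> B2" "A2 \<in> sets (borel :: ereal measure)" "B2 \<in> sets G"
    unfolding Egen_def mem_Collect_eq by metis
  have e: "a \<inter> b = Y -` (A1 \<inter> A2) \<inter> (B1 \<inter> B2)" using a b by auto
  have "A1 \<inter> A2 \<in> sets (borel :: ereal measure)" using a b by auto
  moreover have "B1 \<inter> B2 \<in> sets G" using a b by auto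
  ultimately show "a \<inter> b \<in> Egen" unfolding Egen_def
    by (intro CollectI exI[of _ "A1 \<inter> A2"] exI[of _ "B1 \<inter> B2"]) (simp add: e)
qed

lemma Egen_space: "Egen \<subseteq> Pow (space M)"
proof
  fix a assume "a \<in> Egen"
  then obtain A B where "a = Y -` A \<inter> B" "B \<in> sets G" unfolding Egen_def mem_Collect_eq by metis
  moreover hence "B \<subseteq> space M" using setsG sets.sets_into_space by blast
  ultimately show "a \<in> Pow (space M)" by auto
qed

lemma space_Egen: "space M \<in> Egen"
proof -
  have "space M = Y -` UNIV \<inter> space M" by simp
  moreover have "space M \<in> sets G" using sets.top[of G] spG by simp
  ultimately show ?thesis unfolding Egen_def
    by (intro CollectI exI[of _ UNIV] exI[of _ "space M"]) simp
qed

lemma ce: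
  assumes x0: "x0 \<in> {-1,1}"
  shows "AE \<omega> in M. real_cond_exp M F (indicator (Ix x0)) \<omega> = vpost x0 (m \<omega>) (\<tau> (Y \<omega>))"
proof -
  interpret FS: finite_measure_subalgebra M F by unfold_locales (rule subF)
  define v where "v \<omega> = vpost x0 (m \<omega>) (\<tau> (Y \<omega>))" for \<omega>
  have vF[measurable]: "v \<in> borel_measurable F"
  proof -
    have vp: "(\<lambda>p::real\<times>real. vpost x0 (fst p) (snd p)) \<in> borel_measurable (borel \<Otimes>\<^sub>M borel)"
      unfolding vpost_def by measurable
    have tY: "(\<lambda>\<omega>. \<tau> (Y \<omega>)) \<in> borel_measurable F"
      using measurable_comp[OF Y_F \<tau>] by (simp add: o_def)
    have "(\<lambda>\<omega>. (m \<omega>, \<tau> (Y \<omega>))) \<in> measurable F (borel \<Otimes>\<^sub>M borel)"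
      by (rule measurable_Pair[OF m_F tY])
    from measurable_comp[OF this vp] have "(\<lambda>\<omega>. vpost x0 (m \<omega>) (\<tau> (Y \<omega>))) \<in> borel_measurable F"
      by (simp add: o_def)
    thus ?thesis unfolding v_def[abs_def] .
  qed
  have vM[measurable]: "v \<in> borel_measurable M" by (rule measurable_from_subalg[OF subF vF])
  have vb: "0 \<le> v \<omega>" "v \<omega> \<le> 1" if w: "\<omega> \<in> space M" for \<omega>
    using vpost_bounds[OF mb[OF w] \<tau>b x0] unfolding v_def by auto
  define f :: "'a \<Rightarrow> real" where "f = indicator (Ix x0)"
  have fM[measurable]: "f \<in> borel_measurable M" unfolding f_def by measurable
  have fb: "0 \<le> f \<omega>" "f \<omega> \<le> 1" for \<omega> unfolding f_def by (auto simp: indicator_def)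
  define N1 where "N1 = distr (density M (\<lambda>\<omega>. ennreal (f \<omega>))) F (\<lambda>\<omega>. \<omega>)"
  define N2 where "N2 = distr (density M (\<lambda>\<omega>. ennreal (v \<omega>))) F (\<lambda>\<omega>. \<omega>)"
  have idF: "(\<lambda>\<omega>. \<omega>) \<in> measurable (density M h) F" for h :: "'a \<Rightarrow> ennreal"
  proof (rule measurableI)
    fix A assume "A \<in> sets F"
    hence "A \<in> sets M" using setsF by blast
    moreover have "A \<subseteq> space M" using calculation sets.sets_into_space by blast
    ultimately show "(\<lambda>\<omega>. \<omega>) -` A \<inter> space (density M h) \<in> sets (density M h)"
      by (simp add: Int_absorb2)
  qed (simp add: spF)
  have em: "emeasure (distr (density M (\<lambda>\<omega>. ennreal (h \<omega>))) F (\<lambda>\<omega>. \<omega>)) A = ennreal (\<integral>\<omega>. h \<omega> * indicator A \<omega> \<partial>M)"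
    if A: "A \<in> sets F" and h: "h \<in> borel_measurable M" "\<And>\<omega>. \<omega> \<in> space M \<Longrightarrow> 0 \<le> h \<omega>"
       "\<And>\<omega>. \<omega> \<in> space M \<Longrightarrow> h \<omega> \<le> 1" for A h
  proof -
    have AM: "A \<in> sets M" using A setsF by blast
    hence "A \<subseteq> space M" using sets.sets_into_space by blast
    hence "(\<lambda>\<omega>. \<omega>) -` A \<inter> space (density M (\<lambda>\<omega>. ennreal (h \<omega>))) = A" by auto
    thus ?thesis using emF[OF h AM] by (simp add: emeasure_distr[OF idF A])
  qed
  have N12: "N1 = N2"
  proof (rule measure_eqI_generator_eq[OF Egen_stable Egen_space])
    show "sets N1 = sigma_sets (space M) Egen" unfolding N1_def Egen_def by (simp add: Fgen)
    show "sets N2 = sigma_sets (space M) Egen" unfolding N2_def Egen_def by (simp add: Fgen)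
    show "range (\<lambda>i::nat. space M) \<subseteq> Egen" using space_Egen by auto
    show "(\<Union>i::nat. space M) = space M" by simp
    have sF: "space M \<in> sets F" using sets.top[of F] spF by simp
    show "emeasure N1 (space M) \<noteq> \<infinity>" for i :: nat
      unfolding N1_def using em[OF sF fM] fb by simp
    fix E assume "E \<in> Egen"
    then obtain A B where E: "E = Y -` A \<inter> B" and A: "A \<in> sets (borel :: ereal measure)" and B: "B \<in> sets G"
      unfolding Egen_def mem_Collect_eq by metis
    have EF: "E \<in> sets F" unfolding Fgen E
      by (rule sigma_sets.Basic, intro CollectI exI[of _ A] exI[of _ B]) (simp add: A B)
    have "emeasure N1 E = ennreal (\<integral>\<omega>. f \<omega> * indicator E \<omega> \<partial>M)"
      unfolding N1_def using em[OF EF fM] fb by simp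
    also have "(\<integral>\<omega>. f \<omega> * indicator E \<omega> \<partial>M) = (\<integral>\<omega>. v \<omega> * indicator E \<omega> \<partial>M)"
      unfolding E f_def v_def by (rule ce_gen[OF x0 A B])
    also have "ennreal \<dots> = emeasure N2 E"
      unfolding N2_def using em[OF EF vM] vb by simp
    finally show "emeasure N1 E = emeasure N2 E" .
  qed
  show ?thesis
  proof -
    have "AE \<omega> in M. real_cond_exp M F f \<omega> = v \<omega>"
    proof (rule FS.real_cond_exp_charact)
      show "integrable M f" by (rule bint[where B=1]) (use fb in auto)
      show "integrable M v" by (rule bint[where B=1]) (use vb in auto)
      show "v \<in> borel_measurable F" by (rule vF)
      fix A assume A: "A \<in> sets F"
      have n1: "0 \<le> (\<integral>\<omega>. f \<omega> * indicator A \<omega> \<partial>M)"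
        using fb by (intro integral_nonneg_AE AE_I2) (simp add: indicator_def)
      have n2: "0 \<le> (\<integral>\<omega>. v \<omega> * indicator A \<omega> \<partial>M)"
        using vb by (intro integral_nonneg_AE AE_I2) (simp add: indicator_def)
      have "ennreal (\<integral>\<omega>. f \<omega> * indicator A \<omega> \<partial>M) = ennreal (\<integral>\<omega>. v \<omega> * indicator A \<omega> \<partial>M)"
        using em[OF A fM] em[OF A vM] fb vb N12 unfolding N1_def N2_def by simp
      hence "(\<integral>\<omega>. f \<omega> * indicator A \<omega> \<partial>M) = (\<integral>\<omega>. v \<omega> * indicator A \<omega> \<partial>M)"
        using n1 n2 by simp
      thus "(\<integral>\<omega>\<in>A. f \<omega> \<partial>M) = (\<integral>\<omega>\<in>A. v \<omega> \<partial>M)"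
        unfolding set_lebesgue_integral_def by (simp add: mult.commute)
    qed
    thus ?thesis unfolding f_def v_def .
  qed
qed

end



lemma ent_bounds: fixes p :: real assumes "0 \<le> p" "p \<le> 1"
  shows "0 \<le> ent p" "ent p \<le> 1 / ln 2"
proof -
  have l2: "ln (2::real) > 0" by simp
  have "0 \<le> ent p \<and> ent p \<le> 1 / ln 2"
  proof (cases "p = 0")
    case True thus ?thesis by (simp add: ent_def)
  next
    case False hence p: "0 < p" using assms by simp
    have lnp: "ln p \<le> 0" using p assms by simp
    have "ln (1/p) \<le> 1/p - 1" using p by (intro ln_le_minus_one) simp
    hence "- ln p \<le> 1/p - 1" using p by (simp add: ln_div)
    hence "p * (- ln p) \<le> p * (1/p - 1)" using p by (intro mult_left_mono) auto
    hence "- p * ln p \<le> p * (1/p - 1)" by simp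
    also have "\<dots> \<le> 1" using p assms by (simp add: field_simps)
    finally have u: "- p * ln p \<le> 1" .
    have "0 \<le> - p * ln p" using p lnp by (simp add: mult_nonneg_nonpos)
    hence "0 \<le> (- p * ln p) / ln 2" using l2 by (intro divide_nonneg_pos) auto
    moreover have "(- p * ln p) / ln 2 \<le> 1 / ln 2"
      by (rule divide_right_mono[OF u]) (use l2 in simp)
    moreover have "ent p = (- p * ln p) / ln 2" unfolding ent_def log_def by simp
    ultimately show ?thesis by simp
  qed
  thus "0 \<le> ent p" "ent p \<le> 1 / ln 2" by auto
qed

lemma Kf_bound: fixes a t :: real assumes a: "\<bar>a\<bar> \<le> 1" and t: "\<bar>t\<bar> \<le> 1"
  shows "\<bar>Kf a t\<bar> \<le> 4 / ln 2"
proof -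
  have v1: "0 \<le> vpost 1 a t" "vpost 1 a t \<le> 1" using vpost_bounds[OF a t] by auto
  have v2: "0 \<le> vpost (-1) a t" "vpost (-1) a t \<le> 1" using vpost_bounds[OF a t] by auto
  have e: "0 \<le> ent (vpost 1 a t) + ent (vpost (-1) a t)" "ent (vpost 1 a t) + ent (vpost (-1) a t) \<le> 2 / ln 2"
    using ent_bounds[OF v1] ent_bounds[OF v2] by auto
  have at: "\<bar>a*t\<bar> \<le> 1" using a t by (simp add: abs_mult mult_le_one)
  have d: "0 \<le> 1 + a*t" "1 + a*t \<le> 2" using at by (auto simp: abs_le_iff)
  have "\<bar>Kf a t\<bar> = (1 + a*t) * (ent (vpost 1 a t) + ent (vpost (-1) a t))"
    unfolding Kf_def using d e by simp
  also have "\<dots> \<le> 2 * (2 / ln 2)" using d e by (intro mult_mono) auto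
  finally show ?thesis by simp
qed

lemma Kf_meas[measurable]: "(\<lambda>p::real\<times>real. Kf (fst p) (snd p)) \<in> borel_measurable (borel \<Otimes>\<^sub>M borel)"
  unfolding Kf_def vpost_def ent_def by measurable

lemma Kf_meas1[measurable]: "Kf a \<in> borel_measurable borel"
proof -
  have "(\<lambda>t. (a, t)) \<in> measurable borel (borel \<Otimes>\<^sub>M borel)" by measurable
  from measurable_comp[OF this Kf_meas] show ?thesis by (simp add: o_def)
qed

lemma Hb_meas[measurable]: "Hb \<in> borel_measurable borel"
  unfolding Hb_def[abs_def] ent_def by measurable

lemma ck_nn: "0 \<le> ck (Suc k)" unfolding ck_Suc by simp

lemma term_bound: fixes a :: real assumes "\<bar>a\<bar> \<le> 1" shows "0 \<le> 1 - a^(2*n)" "1 - a^(2*n) \<le> 1"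
proof -
  have "a^(2*n) = (a^2)^n" by (simp add: power_mult)
  moreover have "0 \<le> a^2" "a^2 \<le> 1" using assms by (auto simp: abs_le_square_iff[of _ 1, simplified])
  ultimately have "0 \<le> a^(2*n)" "a^(2*n) \<le> 1" by (auto intro: power_le_one)
  thus "0 \<le> 1 - a^(2*n)" "1 - a^(2*n) \<le> 1" by auto
qed

lemma (in prob_space) sums_int:
  fixes f :: "nat \<Rightarrow> 'a \<Rightarrow> real"
  assumes fm[measurable]: "\<And>k. f k \<in> borel_measurable M"
    and fb: "\<And>k x. x \<in> space M \<Longrightarrow> \<bar>f k x\<bar> \<le> ck (Suc k)"
    and fs: "\<And>x. x \<in> space M \<Longrightarrow> (\<lambda>k. f k x) sums Fn x"
    and Fm[measurable]: "Fn \<in> borel_measurable M"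
  shows "(\<lambda>k. \<integral>x. f k x \<partial>M) sums (\<integral>x. Fn x \<partial>M)"
proof -
  have summ: "summable (\<lambda>k. ck (Suc k))" using ck_sums_1 by (rule sums_summable)
  have "(\<lambda>k. \<integral>x. f k x \<partial>M) sums (\<integral>x. (\<Sum>k. f k x) \<partial>M)"
  proof (rule sums_integral)
    show "integrable M (f k)" for k by (rule bint[where B="ck (Suc k)"]) (use fb in auto)
    show "AE x in M. summable (\<lambda>k. norm (f k x))"
    proof (rule AE_I2)
      fix x assume "x \<in> space M"
      thus "summable (\<lambda>k. norm (f k x))"
        by (intro summable_comparison_test'[OF summ, of 0]) (use fb in auto)
    qed
    show "summable (\<lambda>k. \<integral>x. norm (f k x) \<partial>M)"
    proof (rule summable_comparison_test'[OF summ, of 0])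
      fix k
      have "\<bar>\<integral>x. norm (f k x) \<partial>M\<bar> \<le> ck (Suc k)"
        by (rule int_bound) (use fb in auto)
      thus "norm (\<integral>x. norm (f k x) \<partial>M) \<le> ck (Suc k)" by simp
    qed
  qed
  also have "(\<integral>x. (\<Sum>k. f k x) \<partial>M) = (\<integral>x. Fn x \<partial>M)"
    by (rule Bochner_Integration.integral_cong[OF refl]) (use fs sums_unique in metis)
  finally show ?thesis .
qed

context gen begin

lemma tau_pow_int: "integrable S (\<lambda>y. \<tau> y ^ n)"
proof (rule S.bint[where B=1])
  fix y show "\<bar>\<tau> y ^ n\<bar> \<le> 1" using \<tau>b[of y] by (simp add: power_abs power_le_one)
qed simp

lemma qk_bounds: "0 \<le> (\<integral>y. \<tau> y ^ (2*n) \<partial>S)" "(\<integral>y. \<tau> y ^ (2*n) \<partial>S) \<le> 1"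
proof -
  have b: "0 \<le> \<tau> y ^ (2*n)" "\<tau> y ^ (2*n) \<le> 1" for y
    using term_bound[OF \<tau>b[of y], of n] by auto
  show "0 \<le> (\<integral>y. \<tau> y ^ (2*n) \<partial>S)" using b by (intro integral_nonneg_AE AE_I2) auto
  have "(\<integral>y. \<tau> y ^ (2*n) \<partial>S) \<le> (\<integral>y. 1 \<partial>S)"
    using b by (intro integral_mono tau_pow_int) auto
  thus "(\<integral>y. \<tau> y ^ (2*n) \<partial>S) \<le> 1" by (simp add: S.prob_space)
qed

lemma Kf_tau_meas[measurable]: "(\<lambda>y. Kf a (\<tau> y)) \<in> borel_measurable S"
  using measurable_comp[OF \<tau> Kf_meas1[of a]] by (simp add: o_def measurable_cong_sets[OF sets_S refl])

lemma Kf_tau_int: assumes a: "\<bar>a\<bar> \<le> 1" shows "integrable S (\<lambda>y. Kf a (\<tau> y))"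
  by (rule S.bint[where B="4 / ln 2"]) (use Kf_bound[OF a \<tau>b] in auto)

lemma inner:
  assumes a: "\<bar>a\<bar> \<le> 1"
  shows "(\<lambda>k. ck (Suc k) * (1 - a^(2*Suc k)) * (1 - (\<integral>y. \<tau> y ^ (2*Suc k) \<partial>S))) sums (\<integral>y. Kf a (\<tau> y) \<partial>S)"
proof -
  have sym: "(\<integral>y. Kf a (\<tau> y) \<partial>S) = (\<integral>y. Kf a (- \<tau> y) \<partial>S)"
    by (rule symS[OF Kf_meas1])
  have i2: "integrable S (\<lambda>y. Kf a (- \<tau> y))"
    by (rule S.bint[where B="4 / ln 2"]) (use Kf_bound[OF a] \<tau>b in auto)
  have "2 * (\<integral>y. Kf a (\<tau> y) \<partial>S) = (\<integral>y. Kf a (\<tau> y) + Kf a (- \<tau> y) \<partial>S)"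
    using sym Kf_tau_int[OF a] i2 by simp
  also have "\<dots> = (\<integral>y. 2 * (Hb a + Hb (\<tau> y) - Hb (a * \<tau> y)) \<partial>S)"
    by (rule Bochner_Integration.integral_cong[OF refl]) (rule Kf_sym[OF a \<tau>b])
  also have "\<dots> = 2 * (\<integral>y. Hb a + Hb (\<tau> y) - Hb (a * \<tau> y) \<partial>S)"
    by (rule integral_mult_right_zero)
  finally have K: "(\<integral>y. Kf a (\<tau> y) \<partial>S) = (\<integral>y. Hb a + Hb (\<tau> y) - Hb (a * \<tau> y) \<partial>S)" by simp
  have sm: "(\<lambda>k. \<integral>y. ck (Suc k) * (1 - a^(2*Suc k)) * (1 - \<tau> y ^ (2*Suc k)) \<partial>S)
      sums (\<integral>y. Hb a + Hb (\<tau> y) - Hb (a * \<tau> y) \<partial>S)"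
  proof (rule S.sums_int)
    show "(\<lambda>y. Hb a + Hb (\<tau> y) - Hb (a * \<tau> y)) \<in> borel_measurable S"
    proof -
      have "(\<lambda>y. Hb a + Hb (\<tau> y) - Hb (a * \<tau> y)) \<in> borel_measurable borel" by measurable
      thus ?thesis by (simp add: measurable_cong_sets[OF sets_S refl])
    qed
    show "(\<lambda>y. ck (Suc k) * (1 - a^(2*Suc k)) * (1 - \<tau> y ^ (2*Suc k))) \<in> borel_measurable S" for k
    proof -
      have "(\<lambda>y. ck (Suc k) * (1 - a^(2*Suc k)) * (1 - \<tau> y ^ (2*Suc k))) \<in> borel_measurable borel" by measurable
      thus ?thesis by (simp add: measurable_cong_sets[OF sets_S refl])
    qed
    fix k y
    show "(\<lambda>k. ck (Suc k) * (1 - a^(2*Suc k)) * (1 - \<tau> y ^ (2*Suc k))) sums (Hb a + Hb (\<tau> y) - Hb (a * \<tau> y))"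
      by (rule Hb_series[OF a \<tau>b])
    have t1: "0 \<le> 1 - a^(2*Suc k)" "1 - a^(2*Suc k) \<le> 1" by (rule term_bound[OF a])+
    have t2: "0 \<le> 1 - \<tau> y^(2*Suc k)" "1 - \<tau> y^(2*Suc k) \<le> 1" by (rule term_bound[OF \<tau>b])+
    have "\<bar>ck (Suc k) * (1 - a^(2*Suc k)) * (1 - \<tau> y ^ (2*Suc k))\<bar>
        = ck (Suc k) * ((1 - a^(2*Suc k)) * (1 - \<tau> y ^ (2*Suc k)))"
      using ck_nn t1 t2 by (simp add: abs_mult)
    also have "\<dots> \<le> ck (Suc k) * (1 * 1)"
      using t1 t2 ck_nn by (intro mult_left_mono mult_mono) auto
    finally show "\<bar>ck (Suc k) * (1 - a^(2*Suc k)) * (1 - \<tau> y ^ (2*Suc k))\<bar> \<le> ck (Suc k)" by simp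
  qed
  have eqk: "(\<integral>y. ck (Suc k) * (1 - a^(2*Suc k)) * (1 - \<tau> y ^ (2*Suc k)) \<partial>S)
      = ck (Suc k) * (1 - a^(2*Suc k)) * (1 - (\<integral>y. \<tau> y ^ (2*Suc k) \<partial>S))" for k
  proof -
    have "(\<integral>y. ck (Suc k) * (1 - a^(2*Suc k)) * (1 - \<tau> y ^ (2*Suc k)) \<partial>S)
        = ck (Suc k) * (1 - a^(2*Suc k)) * (\<integral>y. 1 - \<tau> y ^ (2*Suc k) \<partial>S)" by simp
    also have "(\<integral>y. 1 - \<tau> y ^ (2*Suc k) \<partial>S) = 1 - (\<integral>y. \<tau> y ^ (2*Suc k) \<partial>S)"
    proof -
      have "(\<integral>y. 1 - \<tau> y ^ (2*Suc k) \<partial>S) = (\<integral>y. 1 \<partial>S) - (\<integral>y. \<tau> y ^ (2*Suc k) \<partial>S)"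
        by (rule Bochner_Integration.integral_diff) (simp_all add: tau_pow_int del: power_Suc)
      thus ?thesis by (simp add: S.prob_space del: power_Suc)
    qed
    finally show ?thesis .
  qed
  show ?thesis using sm unfolding eqk K .
qed

definition Ent :: "real \<Rightarrow> real \<Rightarrow> real" where
  "Ent a t = ent (vpost 1 a t) + ent (vpost (-1) a t)"

lemma Ent_meas: "(\<lambda>p::real\<times>real. Ent (fst p) (snd p)) \<in> borel_measurable (borel \<Otimes>\<^sub>M borel)"
  unfolding Ent_def vpost_def ent_def by measurable

lemma Ent_bound: assumes a: "\<bar>a\<bar> \<le> 1" and t: "\<bar>t\<bar> \<le> 1" shows "\<bar>Ent a t\<bar> \<le> 2 / ln 2"
proof -
  have v1: "0 \<le> vpost 1 a t" "vpost 1 a t \<le> 1" using vpost_bounds[OF a t] by auto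
  have v2: "0 \<le> vpost (-1) a t" "vpost (-1) a t \<le> 1" using vpost_bounds[OF a t] by auto
  show ?thesis unfolding Ent_def using ent_bounds[OF v1] ent_bounds[OF v2] by simp
qed

lemma mpow_int: "integrable M (\<lambda>\<omega>. m \<omega> ^ n)"
proof (rule bint[where B=1])
  fix \<omega> assume "\<omega> \<in> space M"
  thus "\<bar>m \<omega> ^ n\<bar> \<le> 1" using mb by (simp add: power_abs power_le_one)
qed simp

theorem entropy:
  "(\<lambda>k. ck (Suc k) * (1 - (\<integral>y. \<tau> y ^ (2*Suc k) \<partial>S)) * (1 - (\<integral>\<omega>. m \<omega> ^ (2*Suc k) \<partial>M)))
     sums cond_entropy_bits M {-1,1} X F"
proof -
  define q where "q k = (\<integral>y. \<tau> y ^ (2*Suc k) \<partial>S)" for k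
  have mt_meas: "(\<lambda>\<omega>. (m \<omega>, \<tau> (Y \<omega>))) \<in> measurable M (borel \<Otimes>\<^sub>M borel)"
    by (rule measurable_Pair[OF m_M]) (rule measurable_comp[OF Y \<tau>, unfolded o_def])
  have EntM[measurable]: "(\<lambda>\<omega>. Ent (m \<omega>) (\<tau> (Y \<omega>))) \<in> borel_measurable M"
    using measurable_comp[OF mt_meas Ent_meas] by (simp add: o_def)
  have A: "cond_entropy_bits M {-1,1} X F = (\<integral>\<omega>. Ent (m \<omega>) (\<tau> (Y \<omega>)) \<partial>M)"
  proof -
    have "cond_entropy_bits M {-1,1} X F
        = (\<integral>\<omega>. ent (real_cond_exp M F (indicator (Ix (-1))) \<omega>) + ent (real_cond_exp M F (indicator (Ix 1)) \<omega>) \<partial>M)"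
      unfolding cond_entropy_bits_def Let_def Ix_def[symmetric] ent_def by simp
    also have "\<dots> = (\<integral>\<omega>. Ent (m \<omega>) (\<tau> (Y \<omega>)) \<partial>M)"
    proof (rule integral_cong_AE)
      show "(\<lambda>\<omega>. ent (real_cond_exp M F (indicator (Ix (-1))) \<omega>) + ent (real_cond_exp M F (indicator (Ix 1)) \<omega>))
          \<in> borel_measurable M" unfolding ent_def by measurable
      show "(\<lambda>\<omega>. Ent (m \<omega>) (\<tau> (Y \<omega>))) \<in> borel_measurable M" by (rule EntM)
      show "AE \<omega> in M. ent (real_cond_exp M F (indicator (Ix (-1))) \<omega>) + ent (real_cond_exp M F (indicator (Ix 1)) \<omega>)
          = Ent (m \<omega>) (\<tau> (Y \<omega>))"
      proof -
        have c1: "AE \<omega> in M. real_cond_exp M F (indicator (Ix 1)) \<omega> = vpost 1 (m \<omega>) (\<tau> (Y \<omega>))"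
          by (rule ce) simp
        have c2: "AE \<omega> in M. real_cond_exp M F (indicator (Ix (-1))) \<omega> = vpost (-1) (m \<omega>) (\<tau> (Y \<omega>))"
          by (rule ce) simp
        from c1 c2 show ?thesis by eventually_elim (simp add: Ent_def)
      qed
    qed
    finally show ?thesis .
  qed
  have B: "(\<integral>\<omega>. Ent (m \<omega>) (\<tau> (Y \<omega>)) \<partial>M) = (\<integral>\<omega>. (\<integral>y. Kf (m \<omega>) (\<tau> y) \<partial>S) \<partial>M)"
  proof -
    define g where "g z = Ent (m (fst z)) (\<tau> (snd z))" for z :: "'a \<times> ereal"
    have gm: "(\<lambda>z. (m (fst z), \<tau> (snd z))) \<in> measurable (G \<Otimes>\<^sub>M borel) (borel \<Otimes>\<^sub>M borel)"
    proof (rule measurable_Pair)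
      show "(\<lambda>z. m (fst z)) \<in> borel_measurable (G \<Otimes>\<^sub>M borel)"
        using measurable_comp[OF measurable_fst m] by (simp add: o_def)
      show "(\<lambda>z. \<tau> (snd z)) \<in> borel_measurable (G \<Otimes>\<^sub>M borel)"
        using measurable_comp[OF measurable_snd \<tau>] by (simp add: o_def)
    qed
    have g[measurable]: "g \<in> borel_measurable (G \<Otimes>\<^sub>M borel)"
      using measurable_comp[OF gm Ent_meas] by (simp add: o_def g_def[abs_def])
    have gb: "\<bar>g (\<omega>, y)\<bar> \<le> 2 / ln 2" if "\<omega> \<in> space M" for \<omega> y
      unfolding g_def using Ent_bound[OF mb[OF that] \<tau>b] by simp
    have "(\<integral>\<omega>. Ent (m \<omega>) (\<tau> (Y \<omega>)) \<partial>M) = (\<integral>\<omega>. g (\<omega>, Y \<omega>) \<partial>M)" by (simp add: g_def)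
    also have "\<dots> = (\<integral>\<omega>. (\<integral>y. g (\<omega>, y) * (1 + m \<omega> * \<tau> y) \<partial>S) \<partial>M)"
      by (rule disint[OF g gb])
    also have "\<dots> = (\<integral>\<omega>. (\<integral>y. Kf (m \<omega>) (\<tau> y) \<partial>S) \<partial>M)"
      by (simp add: g_def Kf_def Ent_def mult.commute)
    finally show ?thesis .
  qed
  have Fm: "(\<lambda>\<omega>. \<integral>y. Kf (m \<omega>) (\<tau> y) \<partial>S) \<in> borel_measurable M"
  proof -
    have p: "(\<lambda>z::real\<times>ereal. (fst z, \<tau> (snd z))) \<in> measurable (borel \<Otimes>\<^sub>M S) (borel \<Otimes>\<^sub>M borel)"
    proof (rule measurable_Pair)
      show "(\<lambda>z::real\<times>ereal. fst z) \<in> borel_measurable (borel \<Otimes>\<^sub>M S)" by (rule measurable_fst)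
      show "(\<lambda>z::real\<times>ereal. \<tau> (snd z)) \<in> borel_measurable (borel \<Otimes>\<^sub>M S)"
        using measurable_comp[OF measurable_snd \<tau>[unfolded measurable_cong_sets[OF sets_S[symmetric] refl]]]
        by (simp add: o_def)
    qed
    have "case_prod (\<lambda>a y. Kf a (\<tau> y)) \<in> borel_measurable (borel \<Otimes>\<^sub>M S)"
      using measurable_comp[OF p Kf_meas] by (simp add: o_def case_prod_beta)
    hence "(\<lambda>a. \<integral>y. Kf a (\<tau> y) \<partial>S) \<in> borel_measurable borel"
      by (rule S.borel_measurable_lebesgue_integral)
    from measurable_comp[OF m_M this] show ?thesis by (simp add: o_def)
  qed
  have C: "(\<lambda>k. \<integral>\<omega>. ck (Suc k) * (1 - m \<omega> ^ (2*Suc k)) * (1 - q k) \<partial>M)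
      sums (\<integral>\<omega>. (\<integral>y. Kf (m \<omega>) (\<tau> y) \<partial>S) \<partial>M)"
  proof (rule sums_int[OF _ _ _ Fm])
    show "(\<lambda>\<omega>. ck (Suc k) * (1 - m \<omega> ^ (2*Suc k)) * (1 - q k)) \<in> borel_measurable M" for k by measurable
    fix k \<omega> assume w: "\<omega> \<in> space M"
    show "(\<lambda>k. ck (Suc k) * (1 - m \<omega> ^ (2*Suc k)) * (1 - q k)) sums (\<integral>y. Kf (m \<omega>) (\<tau> y) \<partial>S)"
      unfolding q_def by (rule inner[OF mb[OF w]])
    have t1: "0 \<le> 1 - m \<omega>^(2*Suc k)" "1 - m \<omega>^(2*Suc k) \<le> 1" by (rule term_bound[OF mb[OF w]])+
    have t2: "0 \<le> 1 - q k" "1 - q k \<le> 1" unfolding q_def using qk_bounds[of "Suc k"] by auto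
    have "\<bar>ck (Suc k) * (1 - m \<omega> ^ (2*Suc k)) * (1 - q k)\<bar>
        = ck (Suc k) * ((1 - m \<omega> ^ (2*Suc k)) * (1 - q k))"
      using ck_nn t1 t2 by (simp add: abs_mult)
    also have "\<dots> \<le> ck (Suc k) * (1 * 1)"
      using t1 t2 ck_nn by (intro mult_left_mono mult_mono) auto
    finally show "\<bar>ck (Suc k) * (1 - m \<omega> ^ (2*Suc k)) * (1 - q k)\<bar> \<le> ck (Suc k)" by simp
  qed
  have eqk: "(\<integral>\<omega>. ck (Suc k) * (1 - m \<omega> ^ (2*Suc k)) * (1 - q k) \<partial>M)
      = ck (Suc k) * (1 - q k) * (1 - (\<integral>\<omega>. m \<omega> ^ (2*Suc k) \<partial>M))" for k
  proof -
    have "(\<integral>\<omega>. ck (Suc k) * (1 - m \<omega> ^ (2*Suc k)) * (1 - q k) \<partial>M)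
        = (\<integral>\<omega>. (ck (Suc k) * (1 - q k)) * (1 - m \<omega> ^ (2*Suc k)) \<partial>M)"
      by (rule Bochner_Integration.integral_cong[OF refl]) (simp add: ac_simps)
    also have "\<dots> = (ck (Suc k) * (1 - q k)) * (\<integral>\<omega>. 1 - m \<omega> ^ (2*Suc k) \<partial>M)"
      by (rule integral_mult_right_zero)
    also have "(\<integral>\<omega>. 1 - m \<omega> ^ (2*Suc k) \<partial>M) = (\<integral>\<omega>. 1 \<partial>M) - (\<integral>\<omega>. m \<omega> ^ (2*Suc k) \<partial>M)"
      by (rule Bochner_Integration.integral_diff) (simp_all add: mpow_int del: power_Suc)
    finally show ?thesis by (simp add: prob_space del: power_Suc)
  qed
  note C' = C[unfolded eqk B[symmetric] A[symmetric]]
  show ?thesis using C' unfolding q_def .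
qed

end




locale chan =
  fixes P :: "ereal measure"
  assumes P: "bms P"
begin

lemma P_prob: "prob_space P" using P unfolding bms_def by simp
lemma sets_P[measurable_cong]: "sets P = sets (borel :: ereal measure)" using P unfolding bms_def by simp

sublocale P: prob_space P by (rule P_prob)

abbreviation UC :: "real measure" where "UC \<equiv> uniform_count_measure {-1, 1::real}"

lemma UC_prob: "prob_space UC" by (rule prob_space_uniform_count_measure) auto

definition f0 :: "real \<times> ereal \<Rightarrow> real \<times> ereal" where "f0 z = (fst z, ereal (fst z) * snd z)"

lemma UC_id: "(\<lambda>x. x) \<in> measurable UC (borel :: real measure)"
proof -
  have "(\<lambda>x. x) \<in> measurable (count_space {-1, 1::real}) (borel :: real measure)" by simp
  thus ?thesis by (simp add: measurable_cong_sets[OF sets_uniform_count_measure_count_space refl])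
qed

lemma fst_UCP[measurable]: "(\<lambda>z. fst z) \<in> measurable (UC \<Otimes>\<^sub>M P) (borel :: real measure)"
  using measurable_comp[OF measurable_fst UC_id] by (simp add: o_def)

lemma snd_UCP[measurable]: "(\<lambda>z. snd z) \<in> measurable (UC \<Otimes>\<^sub>M P) (borel :: ereal measure)"
  using measurable_snd[of UC P] by (simp add: measurable_cong_sets[OF refl sets_P])

lemma f0_meas[measurable]: "f0 \<in> measurable (UC \<Otimes>\<^sub>M P) (borel \<Otimes>\<^sub>M borel)"
proof -
  have a: "(\<lambda>z. ereal (fst z)) \<in> borel_measurable (UC \<Otimes>\<^sub>M P)"
    using measurable_comp[OF fst_UCP borel_measurable_ereal[OF measurable_ident]] by (simp add: o_def)
  have "(\<lambda>z. ereal (fst z) * snd z) \<in> borel_measurable (UC \<Otimes>\<^sub>M P)"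
    by (rule borel_measurable_ereal_times[OF a snd_UCP])
  thus ?thesis unfolding f0_def by (intro measurable_Pair fst_UCP)
qed

lemma J_def': "bms_uniform_joint P = distr (UC \<Otimes>\<^sub>M P) (borel \<Otimes>\<^sub>M borel) f0"
proof -
  have "(\<lambda>(x, y). (x, ereal x * y)) = f0" by (auto simp: f0_def fun_eq_iff)
  thus ?thesis unfolding bms_uniform_joint_def by simp
qed

abbreviation J :: "(real \<times> ereal) measure" where "J \<equiv> bms_uniform_joint P"

lemma UCP_prob: "prob_space (UC \<Otimes>\<^sub>M P)"
proof -
  interpret UCp: prob_space UC by (rule UC_prob)
  interpret PP: pair_prob_space UC P by unfold_locales
  show ?thesis by unfold_locales
qed

lemma J_prob: "prob_space J"
  unfolding J_def' by (rule prob_space.prob_space_distr[OF UCP_prob f0_meas])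

lemma sets_J[measurable_cong]: "sets J = sets (borel \<Otimes>\<^sub>M borel :: (real \<times> ereal) measure)"
  unfolding J_def' by simp

lemma space_J: "space J = UNIV"
  unfolding J_def' by (simp add: space_pair_measure)

lemma ereal_m1: "ereal (-1) * y = - y" by (cases y) auto

lemma J_int:
  fixes h :: "real \<times> ereal \<Rightarrow> real"
  assumes h[measurable]: "h \<in> borel_measurable (borel \<Otimes>\<^sub>M borel)"
    and hb: "\<And>x y. x \<in> {-1,1} \<Longrightarrow> \<bar>h (x, y)\<bar> \<le> B"
  shows "(\<integral>z. h z \<partial>J) = ((\<integral>y. h (1, y) \<partial>P) + (\<integral>y. h (-1, - y) \<partial>P)) / 2"
proof -
  interpret UCp: prob_space UC by (rule UC_prob)
  interpret PP: pair_prob_space UC P by unfold_locales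
  have hf: "(\<lambda>z. h (f0 z)) \<in> borel_measurable (UC \<Otimes>\<^sub>M P)"
    using measurable_comp[OF f0_meas h] by (simp add: o_def)
  have "(\<integral>z. h z \<partial>J) = (\<integral>z. h (f0 z) \<partial>(UC \<Otimes>\<^sub>M P))"
    unfolding J_def' by (rule integral_distr[OF f0_meas h])
  also have "\<dots> = (\<integral>x. (\<integral>y. h (f0 (x, y)) \<partial>P) \<partial>UC)"
  proof (rule PP.integral_fst'[symmetric])
    show "integrable (UC \<Otimes>\<^sub>M P) (\<lambda>z. h (f0 z))"
    proof (rule PP.bint[OF hf, where B=B])
      fix z assume "z \<in> space (UC \<Otimes>\<^sub>M P)"
      hence "fst z \<in> {-1,1}" by (auto simp: space_pair_measure space_uniform_count_measure)
      thus "\<bar>h (f0 z)\<bar> \<le> B" using hb[of "fst z"] by (simp add: f0_def)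
    qed
  qed
  also have "\<dots> = (\<Sum>x\<in>{-1,1::real}. (\<integral>y. h (f0 (x, y)) \<partial>P)) / real (card {-1, 1::real})"
    by (rule integral_uniform_count_measure) simp
  also have "\<dots> = ((\<integral>y. h (1, y) \<partial>P) + (\<integral>y. h (-1, - y) \<partial>P)) / 2"
    by (simp add: f0_def ereal_m1)
  finally show ?thesis .
qed

definition S :: "ereal measure" where "S = distr J borel snd"

lemma snd_J[measurable]: "snd \<in> measurable J (borel :: ereal measure)"
  by (simp add: measurable_cong_sets[OF sets_J refl])

lemma S_prob: "prob_space S" unfolding S_def by (rule prob_space.prob_space_distr[OF J_prob snd_J])
lemma sets_S: "sets S = sets (borel :: ereal measure)" unfolding S_def by simp

lemma S_int:
  fixes \<phi> :: "ereal \<Rightarrow> real"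
  assumes [measurable]: "\<phi> \<in> borel_measurable borel" and b: "\<And>y. \<bar>\<phi> y\<bar> \<le> B"
  shows "(\<integral>y. \<phi> y \<partial>S) = ((\<integral>y. \<phi> y \<partial>P) + (\<integral>y. \<phi> (- y) \<partial>P)) / 2"
proof -
  have "(\<integral>y. \<phi> y \<partial>S) = (\<integral>z. \<phi> (snd z) \<partial>J)" unfolding S_def by (rule integral_distr) simp_all
  also have "\<dots> = ((\<integral>y. \<phi> y \<partial>P) + (\<integral>y. \<phi> (- y) \<partial>P)) / 2"
    using J_int[of "\<lambda>z. \<phi> (snd z)" B] b by simp
  finally show ?thesis .
qed

lemma P_neg_meas[measurable]: "A \<in> sets (borel :: ereal measure) \<Longrightarrow> {y::ereal. - y \<in> A} \<in> sets borel"
proof -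
  assume A: "A \<in> sets (borel :: ereal measure)"
  have "(\<lambda>y::ereal. - y) \<in> borel_measurable borel" by simp
  from measurable_sets[OF this A] show ?thesis by (simp add: vimage_def)
qed

lemma S_measure: assumes A: "A \<in> sets (borel :: ereal measure)"
  shows "measure S A = (measure P A + measure P {y. - y \<in> A}) / 2"
proof -
  interpret SS: prob_space S by (rule S_prob)
  have AS: "A \<in> sets S" using A sets_S by simp
  have "measure S A = (\<integral>y. indicator A y \<partial>S)" using AS by simp
  also have "\<dots> = ((\<integral>y. indicator A y \<partial>P) + (\<integral>y. indicator A (- y) \<partial>P)) / 2"
    by (rule S_int[where B=1]) (use A in \<open>auto simp: indicator_def\<close>)
  also have "(\<lambda>y. indicator A (- y)) = (indicator {y. - y \<in> A} :: ereal \<Rightarrow> real)"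
    by (auto simp: indicator_def fun_eq_iff)
  finally show ?thesis using A P_neg_meas[OF A] by (simp add: sets_P)
qed

lemma S_neg_inv: "distr S borel uminus = S"
proof (rule measure_eqI)
  interpret SS: prob_space S by (rule S_prob)
  show "sets (distr S borel uminus) = sets S" by (simp add: sets_S)
  fix A assume "A \<in> sets (distr S borel uminus)"
  hence A: "A \<in> sets (borel :: ereal measure)" by simp
  have um: "(uminus :: ereal \<Rightarrow> ereal) \<in> measurable S borel"
    by (simp add: measurable_cong_sets[OF sets_S refl])
  have sp: "uminus -` A \<inter> space S = {y. - y \<in> A}" using sets_eq_imp_space_eq[OF sets_S] by auto
  have "emeasure (distr S borel uminus) A = emeasure S {y. - y \<in> A}"
    using emeasure_distr[OF um A] sp by simp
  also have "\<dots> = ennreal (measure S {y. - y \<in> A})" by (simp add: SS.emeasure_eq_measure)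
  also have "measure S {y. - y \<in> A} = measure S A"
    using S_measure[OF P_neg_meas[OF A]] S_measure[OF A] by (simp add: add.commute)
  also have "ennreal (measure S A) = emeasure S A" by (simp add: SS.emeasure_eq_measure)
  finally show "emeasure (distr S borel uminus) A = emeasure S A" .
qed

lemma S_int_neg:
  fixes \<psi> :: "ereal \<Rightarrow> real"
  assumes [measurable]: "\<psi> \<in> borel_measurable borel"
  shows "(\<integral>y. \<psi> (- y) \<partial>S) = (\<integral>y. \<psi> y \<partial>S)"
proof -
  have um: "(uminus :: ereal \<Rightarrow> ereal) \<in> measurable S borel"
    by (simp add: measurable_cong_sets[OF sets_S refl])
  have "(\<integral>y. \<psi> y \<partial>S) = (\<integral>y. \<psi> y \<partial>distr S borel uminus)" by (simp add: S_neg_inv)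
  also have "\<dots> = (\<integral>y. \<psi> (- y) \<partial>S)" by (rule integral_distr[OF um]) simp
  finally show ?thesis by simp
qed

abbreviation FJ :: "(real \<times> ereal) measure" where "FJ \<equiv> sigma_rv J snd borel"

definition \<tau>0 :: "real \<times> ereal \<Rightarrow> real" where "\<tau>0 = real_cond_exp J FJ fst"

lemma sets_FJ: "sets FJ = {snd -` A \<inter> space J | A. A \<in> sets (borel :: ereal measure)}"
  unfolding sigma_rv_def by (rule sets_vimage_algebra2) simp

lemma subFJ: "subalgebra J FJ"
  unfolding subalgebra_def
proof
  show "space FJ = space J" unfolding sigma_rv_def by simp
  show "sets FJ \<subseteq> sets J" unfolding sets_FJ
  proof safe
    fix A :: "ereal set" assume "A \<in> sets borel"
    from measurable_sets[OF snd_J this] show "snd -` A \<inter> space J \<in> sets J" .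
  qed
qed

lemma \<tau>0_FJ[measurable]: "\<tau>0 \<in> borel_measurable FJ" unfolding \<tau>0_def by simp
lemma \<tau>0_J[measurable]: "\<tau>0 \<in> borel_measurable J" unfolding \<tau>0_def by simp

lemma \<tau>0_const: "\<tau>0 (a, y) = \<tau>0 (b, y)"
proof -
  have "\<tau>0 -` {\<tau>0 (a, y)} \<inter> space FJ \<in> sets FJ" by (rule measurable_sets[OF \<tau>0_FJ]) simp
  then obtain A where A: "\<tau>0 -` {\<tau>0 (a, y)} \<inter> space FJ = snd -` A \<inter> space J"
    unfolding sets_FJ by blast
  have spF: "space FJ = UNIV" unfolding sigma_rv_def by (simp add: space_J)
  have "(a, y) \<in> snd -` A \<inter> space J" using A[symmetric] spF by auto
  hence "(b, y) \<in> snd -` A \<inter> space J" by (simp add: space_J)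
  hence "(b, y) \<in> \<tau>0 -` {\<tau>0 (a, y)} \<inter> space FJ" using A by simp
  thus ?thesis by simp
qed

lemma AE_fst: "AE z in J. fst z \<in> {-1, 1}"
proof -
  have "AE z in UC \<Otimes>\<^sub>M P. fst (f0 z) \<in> {-1, 1}"
    by (rule AE_I2) (auto simp: f0_def space_pair_measure space_uniform_count_measure)
  moreover have "{z \<in> space (borel \<Otimes>\<^sub>M borel). fst z \<in> {-1, 1::real}} \<in> sets (borel \<Otimes>\<^sub>M borel :: (real \<times> ereal) measure)"
    by measurable
  ultimately show ?thesis unfolding J_def' by (simp add: AE_distr_iff)
qed

lemma fst_int: "integrable J fst"
proof -
  interpret JJ: prob_space J by (rule J_prob)
  show ?thesis
  proof (rule JJ.integrable_const_bound[where B=1])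
    show "AE z in J. norm (fst z) \<le> 1" using AE_fst by eventually_elim auto
  qed (simp add: measurable_cong_sets[OF sets_J refl])
qed

lemma \<tau>0_bound: "AE z in J. \<bar>\<tau>0 z\<bar> \<le> 1"
proof -
  interpret FS: finite_measure_subalgebra J FJ
    by (intro finite_measure_subalgebra.intro finite_measure_subalgebra_axioms.intro subFJ)
       (simp add: prob_space.finite_measure J_prob)
  have "AE z in J. \<tau>0 z \<le> 1" unfolding \<tau>0_def
    by (rule FS.real_cond_exp_le_c[OF fst_int]) (use AE_fst in \<open>eventually_elim, auto\<close>)
  moreover have "AE z in J. -1 \<le> \<tau>0 z" unfolding \<tau>0_def
    by (rule FS.real_cond_exp_ge_c[OF fst_int]) (use AE_fst in \<open>eventually_elim, auto\<close>)
  ultimately show ?thesis by eventually_elim auto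
qed

definition \<tau> :: "ereal \<Rightarrow> real" where "\<tau> y = max (-1) (min 1 (\<tau>0 (0, y)))"

lemma \<tau>_meas[measurable]: "\<tau> \<in> borel_measurable borel"
proof -
  have p: "(\<lambda>y::ereal. (0::real, y)) \<in> measurable borel J"
    by (simp add: measurable_cong_sets[OF refl sets_J])
  have "(\<lambda>y. \<tau>0 (0, y)) \<in> borel_measurable borel" using measurable_comp[OF p \<tau>0_J] by (simp add: o_def)
  thus ?thesis unfolding \<tau>_def[abs_def] by measurable
qed

lemma \<tau>_bound: "\<bar>\<tau> y\<bar> \<le> 1" unfolding \<tau>_def by auto

lemma \<tau>0_eq: "AE z in J. \<tau>0 z = \<tau> (snd z)"
  using \<tau>0_bound
proof eventually_elim
  fix z assume "\<bar>\<tau>0 z\<bar> \<le> 1"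
  moreover have "\<tau>0 z = \<tau>0 (0, snd z)" using \<tau>0_const[of "fst z" "snd z" 0] by simp
  ultimately show "\<tau>0 z = \<tau> (snd z)" unfolding \<tau>_def by auto
qed

lemma FS_interp: "finite_measure_subalgebra J FJ"
  by (intro finite_measure_subalgebra.intro finite_measure_subalgebra_axioms.intro subFJ)
     (simp add: prob_space.finite_measure J_prob)

lemma snd_FJ: "snd \<in> measurable FJ (borel :: ereal measure)"
  unfolding sigma_rv_def by (rule measurable_vimage_algebra1) simp

lemma P_ind: "A \<in> sets (borel :: ereal measure) \<Longrightarrow> (\<integral>y. indicator A y \<partial>P) = measure P A"
  by (simp add: sets_P)

lemma P_ind_neg: "A \<in> sets (borel :: ereal measure) \<Longrightarrow> (\<integral>y. indicator A (- y) \<partial>P) = measure P {y. - y \<in> A}"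
proof -
  assume A: "A \<in> sets (borel :: ereal measure)"
  have "(\<lambda>y. indicator A (- y)) = (indicator {y. - y \<in> A} :: ereal \<Rightarrow> real)"
    by (auto simp: indicator_def fun_eq_iff)
  thus ?thesis using P_neg_meas[OF A] by (simp add: sets_P)
qed

lemma dens_int:
  assumes x: "x \<in> {-1, 1}" and A[measurable]: "A \<in> sets (borel :: ereal measure)"
  shows "(\<integral>y. indicator A y * (1 + x * \<tau> y) \<partial>S) = measure P {y. ereal x * y \<in> A}"
proof -
  interpret JJ: prob_space J by (rule J_prob)
  interpret FS: finite_measure_subalgebra J FJ by (rule FS_interp)
  have indF: "(\<lambda>z. indicator A (snd z) :: real) \<in> borel_measurable FJ"
    using measurable_comp[OF snd_FJ borel_measurable_indicator[OF A]] by (simp add: o_def)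
  have indJ: "(\<lambda>z. indicator A (snd z) :: real) \<in> borel_measurable J"
    using measurable_comp[OF snd_J borel_measurable_indicator[OF A]] by (simp add: o_def)
  have i1: "integrable J (\<lambda>z. indicator A (snd z) :: real)"
    by (rule JJ.bint[OF indJ, where B=1]) (simp add: indicator_def)
  have i2: "integrable J (\<lambda>z. indicator A (snd z) * \<tau>0 z)"
  proof (rule JJ.integrable_const_bound[where B=1])
    show "AE z in J. norm (indicator A (snd z) * \<tau>0 z) \<le> 1"
      using \<tau>0_bound by eventually_elim (simp add: indicator_def)
  qed (use indJ in measurable)
  have i3: "integrable J (\<lambda>z. indicator A (snd z) * fst z)"
  proof (rule JJ.integrable_const_bound[where B=1])
    show "AE z in J. norm (indicator A (snd z) * fst z) \<le> 1"
      using AE_fst by eventually_elim (auto simp: indicator_def)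
  qed (use indJ in \<open>simp add: measurable_cong_sets[OF sets_J refl]\<close>)
  have "(\<integral>y. indicator A y * (1 + x * \<tau> y) \<partial>S) = (\<integral>z. indicator A (snd z) * (1 + x * \<tau> (snd z)) \<partial>J)"
    unfolding S_def by (rule integral_distr) (simp_all add: \<tau>_meas)
  also have "\<dots> = (\<integral>z. indicator A (snd z) + x * (indicator A (snd z) * \<tau>0 z) \<partial>J)"
  proof (rule integral_cong_AE)
    show "AE z in J. indicator A (snd z) * (1 + x * \<tau> (snd z)) = indicator A (snd z) + x * (indicator A (snd z) * \<tau>0 z)"
      using \<tau>0_eq by eventually_elim (simp add: algebra_simps)
  qed (use indJ in \<open>simp_all add: measurable_cong_sets[OF sets_J refl]\<close>)
  also have "\<dots> = (\<integral>z. indicator A (snd z) \<partial>J) + x * (\<integral>z. indicator A (snd z) * \<tau>0 z \<partial>J)"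
    using i1 i2 by simp
  also have "(\<integral>z. indicator A (snd z) * \<tau>0 z \<partial>J) = (\<integral>z. indicator A (snd z) * fst z \<partial>J)"
    unfolding \<tau>0_def by (rule FS.real_cond_exp_intg(2)[OF i3 indF]) (simp add: measurable_cong_sets[OF sets_J refl])
  also have "(\<integral>z. indicator A (snd z) \<partial>J) = (measure P A + measure P {y. - y \<in> A}) / 2"
    using J_int[of "\<lambda>z. indicator A (snd z)" 1] P_ind[OF A] P_ind_neg[OF A] by (simp add: indicator_def)
  also have "(\<integral>z. indicator A (snd z) * fst z \<partial>J) = (measure P A - measure P {y. - y \<in> A}) / 2"
  proof -
    have hm: "(\<lambda>z::real\<times>ereal. indicator A (snd z) * fst z) \<in> borel_measurable (borel \<Otimes>\<^sub>M borel)"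
      by measurable
    have hb: "\<bar>indicator A (snd (a, y)) * fst (a, y)\<bar> \<le> (1::real)" if "a \<in> {-1,1}" for a y
      using that by (auto simp: indicator_def)
    have "(\<integral>z. indicator A (snd z) * fst z \<partial>J) = ((\<integral>y. indicator A y \<partial>P) + (\<integral>y. - indicator A (- y) \<partial>P)) / 2"
      using J_int[OF hm hb] by simp
    thus ?thesis using P_ind[OF A] P_ind_neg[OF A] by simp
  qed
  finally have e: "(\<integral>y. indicator A y * (1 + x * \<tau> y) \<partial>S)
     = (measure P A + measure P {y. - y \<in> A}) / 2 + x * ((measure P A - measure P {y. - y \<in> A}) / 2)" .
  show ?thesis
  proof (cases "x = 1")
    case True thus ?thesis using e by (simp add: field_simps)
  next
    case False hence "x = -1" using x by simp
    thus ?thesis using e by (simp add: ereal_m1 field_simps)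
  qed
qed

lemma dens_nn: "x \<in> {-1, 1} \<Longrightarrow> 0 \<le> 1 + x * \<tau> y"
  using \<tau>_bound[of y] by (auto simp: abs_le_iff)

lemma bms_out_dens:
  assumes x: "x \<in> {-1, 1}"
  shows "bms_out P x = density S (\<lambda>y. ennreal (1 + x * \<tau> y))"
proof (rule measure_eqI)
  interpret SS: prob_space S by (rule S_prob)
  show "sets (bms_out P x) = sets (density S (\<lambda>y. ennreal (1 + x * \<tau> y)))"
    by (simp add: bms_out_def sets_S)
  fix A assume "A \<in> sets (bms_out P x)"
  hence A[measurable]: "A \<in> sets (borel :: ereal measure)" by (simp add: bms_out_def)
  have mx: "(\<lambda>y. ereal x * y) \<in> measurable P (borel :: ereal measure)"
    by (simp add: measurable_cong_sets[OF sets_P refl])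
  have pre: "(\<lambda>y. ereal x * y) -` A \<inter> space P = {y. ereal x * y \<in> A}"
    using sets_eq_imp_space_eq[OF sets_P] by auto
  have "emeasure (bms_out P x) A = emeasure P {y. ereal x * y \<in> A}"
    unfolding bms_out_def using emeasure_distr[OF mx A] pre by simp
  also have "\<dots> = ennreal (measure P {y. ereal x * y \<in> A})" by (simp add: P.emeasure_eq_measure)
  also have "measure P {y. ereal x * y \<in> A} = (\<integral>y. indicator A y * (1 + x * \<tau> y) \<partial>S)"
    by (rule dens_int[OF x A, symmetric])
  also have "ennreal \<dots> = (\<integral>\<^sup>+y. ennreal (indicator A y * (1 + x * \<tau> y)) \<partial>S)"
  proof (rule nn_integral_eq_integral[symmetric])
    show "integrable S (\<lambda>y. indicator A y * (1 + x * \<tau> y))"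
    proof (rule SS.bint[where B=2])
      fix y show "\<bar>indicator A y * (1 + x * \<tau> y)\<bar> \<le> 2"
        using x \<tau>_bound[of y] by (auto simp: indicator_def abs_le_iff)
    qed (simp add: measurable_cong_sets[OF sets_S refl])
    show "AE y in S. 0 \<le> indicator A y * (1 + x * \<tau> y)"
      using dens_nn[OF x] by (intro AE_I2) (simp add: indicator_def)
  qed
  also have "\<dots> = (\<integral>\<^sup>+y. ennreal (1 + x * \<tau> y) * indicator A y \<partial>S)"
    by (intro nn_integral_cong) (simp add: indicator_def)
  also have "\<dots> = emeasure (density S (\<lambda>y. ennreal (1 + x * \<tau> y))) A"
    by (rule emeasure_density[symmetric]) (simp_all add: measurable_cong_sets[OF sets_S refl] sets_S)
  finally show "emeasure (bms_out P x) A = emeasure (density S (\<lambda>y. ennreal (1 + x * \<tau> y))) A" .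
qed

lemma \<tau>_odd: "AE y in S. \<tau> (- y) = - \<tau> y"
proof -
  interpret SS: prob_space S by (rule S_prob)
  have "AE y in S. 1 + \<tau> y = 1 - \<tau> (- y)"
  proof (rule density_unique_real)
    show "integrable S (\<lambda>y. 1 + \<tau> y)"
    proof (rule SS.bint[where B=2])
      fix y show "\<bar>1 + \<tau> y\<bar> \<le> 2" using \<tau>_bound[of y] by (simp add: abs_le_iff)
    qed (simp add: measurable_cong_sets[OF sets_S refl])
    show "integrable S (\<lambda>y. 1 - \<tau> (- y))"
    proof (rule SS.bint[where B=2])
      fix y show "\<bar>1 - \<tau> (- y)\<bar> \<le> 2" using \<tau>_bound[of "- y"] by (simp add: abs_le_iff)
    qed (simp add: measurable_cong_sets[OF sets_S refl])
    fix A assume "A \<in> sets S"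
    hence A[measurable]: "A \<in> sets (borel :: ereal measure)" by (simp add: sets_S)
    have "(\<integral>y\<in>A. 1 + \<tau> y \<partial>S) = (\<integral>y. indicator A y * (1 + 1 * \<tau> y) \<partial>S)"
      unfolding set_lebesgue_integral_def by simp
    also have "\<dots> = measure P {y. ereal 1 * y \<in> A}" by (rule dens_int) simp_all
    also have "\<dots> = measure P A" by simp
    finally have l: "(\<integral>y\<in>A. 1 + \<tau> y \<partial>S) = measure P A" .
    have "(\<integral>y\<in>A. 1 - \<tau> (- y) \<partial>S) = (\<integral>y. (\<lambda>z. indicator {z. - z \<in> A} z * (1 + (-1) * \<tau> z)) (- y) \<partial>S)"
      unfolding set_lebesgue_integral_def by (simp add: indicator_def)
    also have "\<dots> = (\<integral>z. indicator {z. - z \<in> A} z * (1 + (-1) * \<tau> z) \<partial>S)"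
      by (rule S_int_neg) (simp add: P_neg_meas[OF A])
    also have "\<dots> = measure P {y. ereal (-1) * y \<in> {z. - z \<in> A}}"
      by (rule dens_int) (simp_all add: P_neg_meas[OF A])
    also have "\<dots> = measure P A" by (simp add: ereal_m1)
    finally show "(\<integral>y\<in>A. 1 + \<tau> y \<partial>S) = (\<integral>y\<in>A. 1 - \<tau> (- y) \<partial>S)" using l by simp
  qed
  thus ?thesis by eventually_elim simp
qed

lemma symS: fixes \<phi> :: "real \<Rightarrow> real" assumes [measurable]: "\<phi> \<in> borel_measurable borel"
  shows "(\<integral>y. \<phi> (\<tau> y) \<partial>S) = (\<integral>y. \<phi> (- \<tau> y) \<partial>S)"
proof -
  have "(\<integral>y. \<phi> (\<tau> y) \<partial>S) = (\<integral>y. \<phi> (\<tau> (- y)) \<partial>S)"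
    by (rule S_int_neg[symmetric]) simp
  also have "\<dots> = (\<integral>y. \<phi> (- \<tau> y) \<partial>S)"
    by (rule integral_cong_AE) (use \<tau>_odd in \<open>auto simp: measurable_cong_sets[OF sets_S refl] elim: AE_mp\<close>)
  finally show ?thesis .
qed

lemma moment: "bms_moment P k = (\<integral>y. \<tau> y ^ (2*k) \<partial>S)"
proof -
  have "bms_moment P k = (\<integral>z. \<tau>0 z ^ (2*k) \<partial>J)"
    unfolding bms_moment_def Let_def \<tau>0_def ..
  also have "\<dots> = (\<integral>z. \<tau> (snd z) ^ (2*k) \<partial>J)"
    by (rule integral_cong_AE) (use \<tau>0_eq in \<open>auto simp: measurable_cong_sets[OF sets_J refl] elim: AE_mp\<close>)
  also have "\<dots> = (\<integral>y. \<tau> y ^ (2*k) \<partial>S)"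
    unfolding S_def by (rule integral_distr[symmetric]) simp_all
  finally show ?thesis .
qed

end



locale L17 =
  fixes M :: "'a measure" and N :: "'u measure" and P :: "ereal measure"
    and X :: "'a \<Rightarrow> real" and Y :: "'a \<Rightarrow> ereal" and U :: "'a \<Rightarrow> 'u"
    and \<mu> :: real
  assumes M: "prob_space M"
    and P: "bms P"
    and X_meas: "X \<in> borel_measurable M"
    and Y_meas: "Y \<in> borel_measurable M"
    and U_meas: "U \<in> measurable M N"
    and X_vals: "\<And>\<omega>. \<omega> \<in> space M \<Longrightarrow> X \<omega> \<in> {-1, 1}"
    and X_mean: "measure M {\<omega>\<in>space M. X \<omega> = 1} = (1 + \<mu>) / 2"
    and chan_markov: "\<And>x A B. x \<in> {-1, 1} \<Longrightarrow> A \<in> sets (borel :: ereal measure) \<Longrightarrow> B \<in> sets N \<Longrightarrow>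
         measure M {\<omega>\<in>space M. X \<omega> = x \<and> U \<omega> \<in> B \<and> Y \<omega> \<in> A}
           = measure M {\<omega>\<in>space M. X \<omega> = x \<and> U \<omega> \<in> B} * measure (bms_out P x) A"
begin

sublocale MP: prob_space M by (rule M)
sublocale C: chan P by unfold_locales (rule P)

abbreviation Qd :: "real \<Rightarrow> ereal measure" where
  "Qd \<equiv> (\<lambda>x. density C.S (\<lambda>y. ennreal (1 + x * C.\<tau> y)))"

lemma markov': "x \<in> {-1, 1} \<Longrightarrow> A \<in> sets (borel :: ereal measure) \<Longrightarrow> B \<in> sets N \<Longrightarrow>
         measure M {\<omega>\<in>space M. X \<omega> = x \<and> U \<omega> \<in> B \<and> Y \<omega> \<in> A}
           = measure M {\<omega>\<in>space M. X \<omega> = x \<and> U \<omega> \<in> B} * measure (Qd x) A"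
  using chan_markov C.bms_out_dens by simp

lemma X_int: "(\<integral>\<omega>. X \<omega> \<partial>M) = \<mu>"
proof -
  have Xm[measurable]: "X \<in> borel_measurable M" by (rule X_meas)
  have "(\<integral>\<omega>. X \<omega> \<partial>M) = (\<integral>\<omega>. 2 * indicator {\<omega>\<in>space M. X \<omega> = 1} \<omega> - 1 \<partial>M)"
    by (rule Bochner_Integration.integral_cong[OF refl]) (use X_vals in \<open>auto simp: indicator_def\<close>)
  also have "\<dots> = 2 * measure M {\<omega>\<in>space M. X \<omega> = 1} - 1"
  proof -
    define E where "E = {\<omega>\<in>space M. X \<omega> = 1}"
    have E: "E \<in> sets M" unfolding E_def by measurable
    have ie: "integrable M (\<lambda>\<omega>. 2 * indicator E \<omega> :: real)"
      using E by (intro integrable_mult_right integrable_real_indicator) (simp_all add: MP.emeasure_eq_measure)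
    have "(\<integral>\<omega>. 2 * indicator E \<omega> - 1 \<partial>M) = (\<integral>\<omega>. 2 * indicator E \<omega> \<partial>M) - (\<integral>\<omega>. (1::real) \<partial>M)"
      by (rule Bochner_Integration.integral_diff[OF ie]) simp
    also have "\<dots> = 2 * measure M E - 1" using E by (simp add: MP.prob_space MP.emeasure_eq_measure)
    finally show ?thesis unfolding E_def .
  qed
  also have "\<dots> = \<mu>" using X_mean by simp
  finally show ?thesis .
qed

lemma mu_bound: "\<bar>\<mu>\<bar> \<le> 1"
proof -
  have "0 \<le> measure M {\<omega>\<in>space M. X \<omega> = 1}" "measure M {\<omega>\<in>space M. X \<omega> = 1} \<le> 1"
    by (simp_all add: MP.prob_le_1)
  thus ?thesis using X_mean by (simp add: abs_le_iff)
qed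

definition G1 :: "'a measure" where "G1 = sigma (space M) {}"

lemma sets_G1: "sets G1 = {{}, space M}"
  unfolding G1_def by (simp add: sigma_sets_empty_eq)
lemma space_G1: "space G1 = space M"
  unfolding G1_def by simp

lemma subF_rv: "subalgebra M (sigma_rv M Z (borel :: 'b::topological_space measure))"
  if Z: "Z \<in> borel_measurable M" for Z
  unfolding subalgebra_def sigma_rv_def
proof
  show "space (vimage_algebra (space M) Z borel) = space M" by simp
  have "sets (vimage_algebra (space M) Z borel) = {Z -` A \<inter> space M | A. A \<in> sets (borel :: 'b measure)}"
    by (rule sets_vimage_algebra2) simp
  also have "\<dots> \<subseteq> sets M"
  proof safe
    fix A :: "'b set" assume "A \<in> sets borel"
    from measurable_sets[OF Z this] show "Z -` A \<inter> space M \<in> sets M" .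
  qed
  finally show "sets (vimage_algebra (space M) Z borel) \<subseteq> sets M" .
qed

lemma gen1: "gen M C.S X Y G1 (sigma_rv M Y borel) (\<lambda>_. \<mu>) C.\<tau> Qd"
proof (rule gen.intro)
  show "prob_space M" by (rule M)
  show "prob_space C.S" by (rule C.S_prob)
  show "gen_axioms M C.S X Y G1 (sigma_rv M Y borel) (\<lambda>_. \<mu>) C.\<tau> Qd"
  proof (rule gen_axioms.intro)
    show "X \<in> borel_measurable M" by (rule X_meas)
    show "Y \<in> borel_measurable M" by (rule Y_meas)
    show "\<And>\<omega>. \<omega> \<in> space M \<Longrightarrow> X \<omega> \<in> {- 1, 1}" by (rule X_vals)
    show "subalgebra M G1" unfolding subalgebra_def sets_G1 space_G1 by simp
    show "subalgebra M (sigma_rv M Y borel)" by (rule subF_rv[OF Y_meas])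
    show "(\<lambda>_. \<mu>) \<in> borel_measurable G1" by simp
    show "\<And>\<omega>. \<omega> \<in> space M \<Longrightarrow> \<bar>\<mu>\<bar> \<le> 1" using mu_bound by simp
    show "(\<integral>\<omega>. h \<omega> * X \<omega> \<partial>M) = (\<integral>\<omega>. h \<omega> * \<mu> \<partial>M)"
      if h: "h \<in> borel_measurable G1" and hb: "\<And>\<omega>. \<omega> \<in> space M \<Longrightarrow> \<bar>h \<omega>\<bar> \<le> B" for h B
    proof -
      obtain \<omega>0 where w0: "\<omega>0 \<in> space M" using MP.not_empty by blast
      have "h -` {h \<omega>0} \<inter> space G1 \<in> sets G1" by (rule measurable_sets[OF h]) simp
      moreover have "\<omega>0 \<in> h -` {h \<omega>0} \<inter> space G1" using w0 space_G1 by simp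
      ultimately have "h -` {h \<omega>0} \<inter> space G1 = space M" unfolding sets_G1 by auto
      hence hc: "h \<omega> = h \<omega>0" if "\<omega> \<in> space M" for \<omega> using that space_G1 by auto
      have "(\<integral>\<omega>. h \<omega> * X \<omega> \<partial>M) = (\<integral>\<omega>. h \<omega>0 * X \<omega> \<partial>M)"
        by (rule Bochner_Integration.integral_cong[OF refl]) (simp add: hc)
      also have "\<dots> = h \<omega>0 * \<mu>" using X_int by simp
      also have "\<dots> = (\<integral>\<omega>. h \<omega>0 * \<mu> \<partial>M)" by (simp add: MP.prob_space)
      also have "\<dots> = (\<integral>\<omega>. h \<omega> * \<mu> \<partial>M)"
        by (rule Bochner_Integration.integral_cong[OF refl]) (simp add: hc)
      finally show ?thesis .
    qed
    show "sets C.S = sets (borel :: ereal measure)" by (rule C.sets_S)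
    show "C.\<tau> \<in> borel_measurable borel" by (rule C.\<tau>_meas)
    show "\<And>y. \<bar>C.\<tau> y\<bar> \<le> 1" by (rule C.\<tau>_bound)
    show "\<And>\<phi>::real\<Rightarrow>real. \<phi> \<in> borel_measurable borel \<Longrightarrow> (\<integral>y. \<phi> (C.\<tau> y) \<partial>C.S) = (\<integral>y. \<phi> (- C.\<tau> y) \<partial>C.S)"
      by (rule C.symS)
    show "\<And>x. x \<in> {- 1, 1} \<Longrightarrow> Qd x = density C.S (\<lambda>y. ennreal (1 + x * C.\<tau> y))" by simp
    show "measure M {\<omega>\<in>space M. X \<omega> = x \<and> \<omega> \<in> B \<and> Y \<omega> \<in> A}
        = measure M {\<omega>\<in>space M. X \<omega> = x \<and> \<omega> \<in> B} * measure (Qd x) A"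
      if x: "x \<in> {-1, 1}" and A: "A \<in> sets (borel :: ereal measure)" and B: "B \<in> sets G1" for x A B
    proof (cases "B = {}")
      case True thus ?thesis by simp
    next
      case False hence B: "B = space M" using B sets_G1 by auto
      have U': "\<And>\<omega>. \<omega> \<in> space M \<Longrightarrow> U \<omega> \<in> space N" using U_meas by (rule measurable_space)
      have e1: "{\<omega>\<in>space M. X \<omega> = x \<and> \<omega> \<in> B \<and> Y \<omega> \<in> A} = {\<omega>\<in>space M. X \<omega> = x \<and> U \<omega> \<in> space N \<and> Y \<omega> \<in> A}"
        using B U' by auto
      have e2: "{\<omega>\<in>space M. X \<omega> = x \<and> \<omega> \<in> B} = {\<omega>\<in>space M. X \<omega> = x \<and> U \<omega> \<in> space N}"
        using B U' by auto
      show ?thesis unfolding e1 e2 by (rule markov'[OF x A sets.top])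
    qed
    show "sets (sigma_rv M Y borel) = sigma_sets (space M) {Y -` A \<inter> B | A B. A \<in> sets (borel :: ereal measure) \<and> B \<in> sets G1}"
    proof -
      have "sets (sigma_rv M Y borel) = sigma_sets (space M) {Y -` A \<inter> space M | A. A \<in> sets (borel :: ereal measure)}"
        unfolding sigma_rv_def by (rule sets_vimage_algebra)
      also have "{Y -` A \<inter> space M | A. A \<in> sets (borel :: ereal measure)}
          = {Y -` A \<inter> B | A B. A \<in> sets (borel :: ereal measure) \<and> B \<in> sets G1}"
      proof (intro equalityI subsetI)
        fix E assume "E \<in> {Y -` A \<inter> space M | A. A \<in> sets (borel :: ereal measure)}"
        then obtain A where "E = Y -` A \<inter> space M" "A \<in> sets (borel :: ereal measure)" by auto
        thus "E \<in> {Y -` A \<inter> B | A B. A \<in> sets (borel :: ereal measure) \<and> B \<in> sets G1}"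
          by (intro CollectI exI[of _ A] exI[of _ "space M"]) (simp add: sets_G1)
      next
        fix E assume "E \<in> {Y -` A \<inter> B | A B. A \<in> sets (borel :: ereal measure) \<and> B \<in> sets G1}"
        then obtain A B where E: "E = Y -` A \<inter> B" "A \<in> sets (borel :: ereal measure)" "B \<in> sets G1" by auto
        show "E \<in> {Y -` A \<inter> space M | A. A \<in> sets (borel :: ereal measure)}"
        proof (cases "B = {}")
          case True thus ?thesis using E by (intro CollectI exI[of _ "{}"]) simp
        next
          case False hence "B = space M" using E sets_G1 by auto
          thus ?thesis using E by (intro CollectI exI[of _ A]) simp
        qed
      qed
      finally show ?thesis .
    qed
  qed
qed

lemma part1:
  "(\<lambda>k. ck (Suc k) * (1 - bms_moment P (Suc k)) * (1 - \<mu> ^ (2 * Suc k)))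
           sums cond_entropy_bits M {-1, 1} X (sigma_rv M Y borel)"
  using gen.entropy[OF gen1] by (simp add: C.moment MP.prob_space)

abbreviation G2 :: "'a measure" where "G2 \<equiv> sigma_rv M U N"
abbreviation F2 :: "'a measure" where "F2 \<equiv> sigma_rv M (\<lambda>\<omega>. (Y \<omega>, U \<omega>)) (borel \<Otimes>\<^sub>M N)"
abbreviation rce :: "'a \<Rightarrow> real" where "rce \<equiv> real_cond_exp M G2 X"
definition m2 :: "'a \<Rightarrow> real" where "m2 \<omega> = max (-1) (min 1 (rce \<omega>))"

lemma sets_G2: "sets G2 = {U -` A \<inter> space M | A. A \<in> sets N}"
  unfolding sigma_rv_def by (rule sets_vimage_algebra2) (use U_meas in \<open>auto dest: measurable_space\<close>)

lemma subG2: "subalgebra M G2"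
  unfolding subalgebra_def
proof
  show "space G2 = space M" unfolding sigma_rv_def by simp
  show "sets G2 \<subseteq> sets M" unfolding sets_G2
  proof safe
    fix A assume "A \<in> sets N"
    from measurable_sets[OF U_meas this] show "U -` A \<inter> space M \<in> sets M" .
  qed
qed

lemma YU_meas: "(\<lambda>\<omega>. (Y \<omega>, U \<omega>)) \<in> measurable M (borel \<Otimes>\<^sub>M N)"
  by (rule measurable_Pair[OF Y_meas U_meas])

lemma subF2: "subalgebra M F2"
  unfolding subalgebra_def
proof
  show "space F2 = space M" unfolding sigma_rv_def by simp
  have "sets F2 = {(\<lambda>\<omega>. (Y \<omega>, U \<omega>)) -` A \<inter> space M | A. A \<in> sets (borel \<Otimes>\<^sub>M N)}"
    unfolding sigma_rv_def by (rule sets_vimage_algebra2) (use YU_meas in \<open>auto dest: measurable_space\<close>)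
  also have "\<dots> \<subseteq> sets M"
  proof safe
    fix A :: "(ereal \<times> 'u) set" assume "A \<in> sets (borel \<Otimes>\<^sub>M N)"
    from measurable_sets[OF YU_meas this] show "(\<lambda>\<omega>. (Y \<omega>, U \<omega>)) -` A \<inter> space M \<in> sets M" .
  qed
  finally show "sets F2 \<subseteq> sets M" .
qed

lemma FSG: "finite_measure_subalgebra M G2"
  by (intro finite_measure_subalgebra.intro finite_measure_subalgebra_axioms.intro subG2)
     (simp add: MP.finite_measure_axioms)

lemma Xb: "\<omega> \<in> space M \<Longrightarrow> \<bar>X \<omega>\<bar> \<le> 1" using X_vals[of \<omega>] by auto

lemma X_integrable: "integrable M X"
  by (rule MP.bint[OF X_meas, where B=1]) (rule Xb)

lemma rce_bound: "AE \<omega> in M. \<bar>rce \<omega>\<bar> \<le> 1"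
proof -
  interpret FS: finite_measure_subalgebra M G2 by (rule FSG)
  have "AE \<omega> in M. rce \<omega> \<le> 1"
    by (rule FS.real_cond_exp_le_c[OF X_integrable]) (use Xb in \<open>auto intro!: AE_I2 simp: abs_le_iff\<close>)
  moreover have "AE \<omega> in M. -1 \<le> rce \<omega>"
    by (rule FS.real_cond_exp_ge_c[OF X_integrable]) (use Xb in \<open>auto intro!: AE_I2 simp: abs_le_iff\<close>)
  ultimately show ?thesis by eventually_elim auto
qed

lemma m2_eq: "AE \<omega> in M. m2 \<omega> = rce \<omega>"
  using rce_bound by eventually_elim (auto simp: m2_def)

lemma m2_G2[measurable]: "m2 \<in> borel_measurable G2"
  unfolding m2_def[abs_def] by measurable

lemma Fgen2: "sets F2 = sigma_sets (space M) {Y -` A \<inter> B | A B. A \<in> sets (borel :: ereal measure) \<and> B \<in> sets G2}"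
proof -
  let ?YU = "\<lambda>\<omega>. (Y \<omega>, U \<omega>)"
  let ?R = "{a \<times> b | a b. a \<in> sets (borel :: ereal measure) \<and> b \<in> sets N}"
  have YUsp: "?YU \<in> space M \<rightarrow> UNIV \<times> space N" using U_meas by (auto dest: measurable_space)
  have "sets F2 = {?YU -` C \<inter> space M | C. C \<in> sets (borel \<Otimes>\<^sub>M N)}"
    unfolding sigma_rv_def by (rule sets_vimage_algebra2) (use YU_meas in \<open>auto dest: measurable_space\<close>)
  also have "sets (borel \<Otimes>\<^sub>M N) = sigma_sets (UNIV \<times> space N) ?R"
    by (simp add: sets_pair_measure)
  also have "{?YU -` C \<inter> space M | C. C \<in> sigma_sets (UNIV \<times> space N) ?R}
      = sigma_sets (space M) {?YU -` C \<inter> space M | C. C \<in> ?R}"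
    by (rule sigma_sets_vimage_commute[OF YUsp])
  also have "{?YU -` C \<inter> space M | C. C \<in> ?R} = {Y -` A \<inter> B | A B. A \<in> sets (borel :: ereal measure) \<and> B \<in> sets G2}"
  proof (intro equalityI subsetI)
    fix E assume "E \<in> {?YU -` C \<inter> space M | C. C \<in> ?R}"
    then obtain a b where E: "E = ?YU -` (a \<times> b) \<inter> space M" and a: "a \<in> sets (borel :: ereal measure)" and b: "b \<in> sets N"
      by auto
    have e: "E = Y -` a \<inter> (U -` b \<inter> space M)" using E by auto
    have "U -` b \<inter> space M \<in> sets G2" unfolding sets_G2 using b by auto
    thus "E \<in> {Y -` A \<inter> B | A B. A \<in> sets (borel :: ereal measure) \<and> B \<in> sets G2}"
      using a e by (intro CollectI exI[of _ a] exI[of _ "U -` b \<inter> space M"]) simp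
  next
    fix E assume "E \<in> {Y -` A \<inter> B | A B. A \<in> sets (borel :: ereal measure) \<and> B \<in> sets G2}"
    then obtain a B where E: "E = Y -` a \<inter> B" and a: "a \<in> sets (borel :: ereal measure)" and B: "B \<in> sets G2"
      by auto
    from B obtain b where b: "b \<in> sets N" and Bb: "B = U -` b \<inter> space M" unfolding sets_G2 by auto
    have e: "E = ?YU -` (a \<times> b) \<inter> space M" using E Bb by auto
    have "a \<times> b \<in> ?R" using a b by auto
    thus "E \<in> {?YU -` C \<inter> space M | C. C \<in> ?R}" using e by blast
  qed
  finally show ?thesis .
qed

lemma gen2: "gen M C.S X Y G2 F2 m2 C.\<tau> Qd"
proof (rule gen.intro)
  show "prob_space M" by (rule M)
  show "prob_space C.S" by (rule C.S_prob)
  show "gen_axioms M C.S X Y G2 F2 m2 C.\<tau> Qd"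
  proof (rule gen_axioms.intro)
    show "X \<in> borel_measurable M" by (rule X_meas)
    show "Y \<in> borel_measurable M" by (rule Y_meas)
    show "\<And>\<omega>. \<omega> \<in> space M \<Longrightarrow> X \<omega> \<in> {- 1, 1}" by (rule X_vals)
    show "subalgebra M G2" by (rule subG2)
    show "subalgebra M F2" by (rule subF2)
    show "m2 \<in> borel_measurable G2" by (rule m2_G2)
    show "\<And>\<omega>. \<omega> \<in> space M \<Longrightarrow> \<bar>m2 \<omega>\<bar> \<le> 1" by (auto simp: m2_def)
    show "(\<integral>\<omega>. h \<omega> * X \<omega> \<partial>M) = (\<integral>\<omega>. h \<omega> * m2 \<omega> \<partial>M)"
      if h[measurable]: "h \<in> borel_measurable G2" and hb: "\<And>\<omega>. \<omega> \<in> space M \<Longrightarrow> \<bar>h \<omega>\<bar> \<le> B" for h B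
    proof -
      interpret FS: finite_measure_subalgebra M G2 by (rule FSG)
      have hM: "h \<in> borel_measurable M" by (rule measurable_from_subalg[OF subG2 h])
      have ihX: "integrable M (\<lambda>\<omega>. h \<omega> * X \<omega>)"
      proof (rule MP.bint[where B=B])
        fix \<omega> assume w: "\<omega> \<in> space M"
        have "\<bar>h \<omega> * X \<omega>\<bar> \<le> B * 1" unfolding abs_mult
          using hb[OF w] Xb[OF w] by (intro mult_mono) auto
        thus "\<bar>h \<omega> * X \<omega>\<bar> \<le> B" by simp
      qed (use hM X_meas in measurable)
      have "(\<integral>\<omega>. h \<omega> * X \<omega> \<partial>M) = (\<integral>\<omega>. h \<omega> * rce \<omega> \<partial>M)"
        by (rule FS.real_cond_exp_intg(2)[OF ihX h X_meas, symmetric])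
      also have "\<dots> = (\<integral>\<omega>. h \<omega> * m2 \<omega> \<partial>M)"
      proof (rule integral_cong_AE)
        have m2M: "m2 \<in> borel_measurable M" by (rule measurable_from_subalg[OF subG2 m2_G2])
        show "(\<lambda>\<omega>. h \<omega> * rce \<omega>) \<in> borel_measurable M" using hM by measurable
        show "(\<lambda>\<omega>. h \<omega> * m2 \<omega>) \<in> borel_measurable M" using hM m2M by measurable
        show "AE \<omega> in M. h \<omega> * rce \<omega> = h \<omega> * m2 \<omega>" using m2_eq by eventually_elim simp
      qed
      finally show ?thesis .
    qed
    show "sets C.S = sets (borel :: ereal measure)" by (rule C.sets_S)
    show "C.\<tau> \<in> borel_measurable borel" by (rule C.\<tau>_meas)
    show "\<And>y. \<bar>C.\<tau> y\<bar> \<le> 1" by (rule C.\<tau>_bound)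
    show "\<And>\<phi>::real\<Rightarrow>real. \<phi> \<in> borel_measurable borel \<Longrightarrow> (\<integral>y. \<phi> (C.\<tau> y) \<partial>C.S) = (\<integral>y. \<phi> (- C.\<tau> y) \<partial>C.S)"
      by (rule C.symS)
    show "\<And>x. x \<in> {- 1, 1} \<Longrightarrow> Qd x = density C.S (\<lambda>y. ennreal (1 + x * C.\<tau> y))" by simp
    show "measure M {\<omega>\<in>space M. X \<omega> = x \<and> \<omega> \<in> B \<and> Y \<omega> \<in> A}
        = measure M {\<omega>\<in>space M. X \<omega> = x \<and> \<omega> \<in> B} * measure (Qd x) A"
      if x: "x \<in> {-1, 1}" and A: "A \<in> sets (borel :: ereal measure)" and B: "B \<in> sets G2" for x A B
    proof -
      from B obtain b where b: "b \<in> sets N" and Bb: "B = U -` b \<inter> space M" unfolding sets_G2 by auto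
      have e1: "{\<omega>\<in>space M. X \<omega> = x \<and> \<omega> \<in> B \<and> Y \<omega> \<in> A} = {\<omega>\<in>space M. X \<omega> = x \<and> U \<omega> \<in> b \<and> Y \<omega> \<in> A}"
        using Bb by auto
      have e2: "{\<omega>\<in>space M. X \<omega> = x \<and> \<omega> \<in> B} = {\<omega>\<in>space M. X \<omega> = x \<and> U \<omega> \<in> b}"
        using Bb by auto
      show ?thesis unfolding e1 e2 by (rule markov'[OF x A b])
    qed
    show "sets F2 = sigma_sets (space M) {Y -` A \<inter> B | A B. A \<in> sets (borel :: ereal measure) \<and> B \<in> sets G2}"
      by (rule Fgen2)
  qed
qed

lemma part2:
  "(\<lambda>k. ck (Suc k) * (1 - bms_moment P (Suc k))
              * (1 - (\<integral>\<omega>. \<bar>real_cond_exp M (sigma_rv M U N) X \<omega>\<bar> ^ (2 * Suc k) \<partial>M)))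
           sums cond_entropy_bits M {-1, 1} X (sigma_rv M (\<lambda>\<omega>. (Y \<omega>, U \<omega>)) (borel \<Otimes>\<^sub>M N))"
proof -
  have eq: "(\<integral>\<omega>. m2 \<omega> ^ (2 * Suc k) \<partial>M) = (\<integral>\<omega>. \<bar>rce \<omega>\<bar> ^ (2 * Suc k) \<partial>M)" for k
  proof (rule integral_cong_AE)
    have m2M: "m2 \<in> borel_measurable M" by (rule measurable_from_subalg[OF subG2 m2_G2])
    show "(\<lambda>\<omega>. m2 \<omega> ^ (2 * Suc k)) \<in> borel_measurable M" using m2M by measurable
    show "(\<lambda>\<omega>. \<bar>rce \<omega>\<bar> ^ (2 * Suc k)) \<in> borel_measurable M" by measurable
    show "AE \<omega> in M. m2 \<omega> ^ (2 * Suc k) = \<bar>rce \<omega>\<bar> ^ (2 * Suc k)"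
      using m2_eq
    proof eventually_elim
      fix \<omega> assume "m2 \<omega> = rce \<omega>"
      moreover have "even (2 * Suc k)" by simp
      ultimately show "m2 \<omega> ^ (2 * Suc k) = \<bar>rce \<omega>\<bar> ^ (2 * Suc k)"
        using power_even_abs[of "2 * Suc k" "rce \<omega>"] by (simp del: power_Suc)
    qed
  qed
  show ?thesis using gen.entropy[OF gen2] unfolding eq by (simp add: C.moment)
qed

end

theorem lemma17:
  fixes M :: "'a measure" and N :: "'u measure" and P :: "ereal measure"
    and X :: "'a \<Rightarrow> real" and Y :: "'a \<Rightarrow> ereal" and U :: "'a \<Rightarrow> 'u"
    and \<mu> :: real
  assumes M: "prob_space M"
    and P: "bms P"
    and X_meas: "X \<in> borel_measurable M"
    and Y_meas: "Y \<in> borel_measurable M"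
    and U_meas: "U \<in> measurable M N"
    and X_vals: "\<And>\<omega>. \<omega> \<in> space M \<Longrightarrow> X \<omega> \<in> {-1, 1}"
    and X_mean: "measure M {\<omega>\<in>space M. X \<omega> = 1} = (1 + \<mu>) / 2"
    and chan_markov: "\<And>x A B. x \<in> {-1, 1} \<Longrightarrow> A \<in> sets (borel :: ereal measure) \<Longrightarrow> B \<in> sets N \<Longrightarrow>
         measure M {\<omega>\<in>space M. X \<omega> = x \<and> U \<omega> \<in> B \<and> Y \<omega> \<in> A}
           = measure M {\<omega>\<in>space M. X \<omega> = x \<and> U \<omega> \<in> B} * measure (bms_out P x) A"
  shows "(\<lambda>k. ck (Suc k) * (1 - bms_moment P (Suc k)) * (1 - \<mu> ^ (2 * Suc k)))
           sums cond_entropy_bits M {-1, 1} X (sigma_rv M Y borel)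
       \<and> (\<lambda>k. ck (Suc k) * (1 - bms_moment P (Suc k))
              * (1 - (\<integral>\<omega>. \<bar>real_cond_exp M (sigma_rv M U N) X \<omega>\<bar> ^ (2 * Suc k) \<partial>M)))
           sums cond_entropy_bits M {-1, 1} X (sigma_rv M (\<lambda>\<omega>. (Y \<omega>, U \<omega>)) (borel \<Otimes>\<^sub>M N))"
proof -
  have L: "L17 M N P X Y U \<mu>"
    by (rule L17.intro[OF M P X_meas Y_meas U_meas X_vals X_mean chan_markov])
  show ?thesis using L17.part1[OF L] L17.part2[OF L] by simp
qed

end
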